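(* Fix $\beta > 0$. For $\alpha > 0$ let $G_\alpha(s) = \frac{\beta}{\alpha}\exp(-\frac{\beta s}{\alpha})$ for $s \geq 0$ and $G_\alpha(s) = 0$ for $s < 0$. There exist constants $C > 0$ and $\epsilon_0 \in (0,1/2)$ such that for all $\alpha > 0$, all $\epsilon \in (0, \epsilon_0)$ and all $u \in \mathrm{H}^{1/2-\epsilon}(\mathbb{R})$: $$|G_\alpha \ast u|_{\mathrm{H}^{1/2}} \leq C \alpha^{-\epsilon} |u|_{\mathrm{H}^{1/2-\epsilon}},$$ i.e. the map $u \mapsto G_\alpha \ast u$ from $\mathrm{H}^{1/2-\epsilon}(\mathbb{R})$ to $\mathrm{H}^{1/2}(\mathbb{R})$ has norm of order $\alpha^{-\epsilon}$ for small $\epsilon$, uniformly in $\alpha$.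
   Context: For $s \in (0,1)$, $|u|_{\mathrm{H}^s}^2 = \int_{\mathbb{R}} |\xi|^{2s} |(\mathcal{F}u)(\xi)|^2\,\mathrm{d}\xi$, where $\mathcal{F}$ is the Fourier transform; $\ast$ denotes convolution on $\mathbb{R}$. *)

theory Defs
  imports "HOL-Analysis.Analysis"
begin

text \<open>Fourier transform convention:
  (F u)(xi) = integral of exp(-i x xi) u(x) dx; for u in L^2 it is the Plancherel
  transform, i.e. the L^2-limit of the truncated integrals over [-R,R].\<close>

definition is_L2 :: "(real \<Rightarrow> complex) \<Rightarrow> bool" where
  "is_L2 u \<longleftrightarrow> u \<in> borel_measurable lborel \<and> integrable lborel (\<lambda>x. (cmod (u x))\<^sup>2)"

definition fourier_trunc :: "(real \<Rightarrow> complex) \<Rightarrow> real \<Rightarrow> real \<Rightarrow> complex" where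
  "fourier_trunc u R \<xi> = (LINT x:{-R..R}|lborel. cis (- (x * \<xi>)) * u x)"

definition has_fourier_L2 :: "(real \<Rightarrow> complex) \<Rightarrow> (real \<Rightarrow> complex) \<Rightarrow> bool" where
  "has_fourier_L2 u F \<longleftrightarrow> F \<in> borel_measurable lborel \<and>
     ((\<lambda>R. \<integral>\<^sup>+ \<xi>. ennreal ((cmod (F \<xi> - fourier_trunc u R \<xi>))\<^sup>2) \<partial>lborel) \<longlongrightarrow> 0) at_top"

definition fourier_L2 :: "(real \<Rightarrow> complex) \<Rightarrow> real \<Rightarrow> complex" where
  "fourier_L2 u = (SOME F. has_fourier_L2 u F)"

definition Hs_seminorm_sq :: "real \<Rightarrow> (real \<Rightarrow> complex) \<Rightarrow> ennreal" where
  "Hs_seminorm_sq s u = (\<integral>\<^sup>+ \<xi>. ennreal (\<bar>\<xi>\<bar> powr (2 * s) * (cmod (fourier_L2 u \<xi>))\<^sup>2) \<partial>lborel)"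

definition in_Hs :: "real \<Rightarrow> (real \<Rightarrow> complex) \<Rightarrow> bool" where
  "in_Hs s u \<longleftrightarrow> is_L2 u \<and> Hs_seminorm_sq s u < \<infinity>"

definition G_kernel :: "real \<Rightarrow> real \<Rightarrow> real \<Rightarrow> real" where
  "G_kernel \<beta> \<alpha> s = (if s \<ge> 0 then \<beta> / \<alpha> * exp (- (\<beta> * s / \<alpha>)) else 0)"

definition convolution :: "(real \<Rightarrow> real) \<Rightarrow> (real \<Rightarrow> complex) \<Rightarrow> real \<Rightarrow> complex" where
  "convolution g u x = (\<integral> y. complex_of_real (g (x - y)) * u y \<partial>lborel)"

end

theory Submission
  imports Defs "HOL-Probability.Characteristic_Functions"
begin

hide_const (open) Convolution.convolution

lemma gauss_ft:
  assumes s: "s > 0"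
  shows "(\<integral>\<xi>. cis (-(z*\<xi>)) * complex_of_real (exp (-(s*\<xi>)\<^sup>2/2)) \<partial>lborel)
     = complex_of_real (2*pi * normal_density 0 s z)"
proof -
  have c: "char std_normal_distribution (-z/s) = complex_of_real (exp(-((-z/s)\<^sup>2)/2))"
    using char_std_normal_distribution by simp
  have c2: "char std_normal_distribution (-z/s)
      = (\<integral>x. std_normal_density x *\<^sub>R iexp (-z/s * x) \<partial>lborel)"
    unfolding char_def by (subst integral_density) auto
  have "(\<integral>\<xi>. cis (-(z*\<xi>)) * complex_of_real (exp (-(s*\<xi>)\<^sup>2/2)) \<partial>lborel)
     = \<bar>1/s\<bar> *\<^sub>R (\<integral>x. cis (-(z*(0 + 1/s*x))) * complex_of_real (exp (-(s*(0+1/s*x))\<^sup>2/2)) \<partial>lborel)"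
    by (rule lborel_integral_real_affine) (use s in simp)
  also have "(\<lambda>x. cis (-(z*(0 + 1/s*x))) * complex_of_real (exp (-(s*(0+1/s*x))\<^sup>2/2)))
      = (\<lambda>x. complex_of_real (sqrt (2*pi)) * (std_normal_density x *\<^sub>R iexp (-z/s * x)))"
    using s by (auto simp: std_normal_density_def cis_conv_exp fun_eq_iff scaleR_conv_of_real)
  also have "(\<integral>x. complex_of_real (sqrt (2*pi)) * (std_normal_density x *\<^sub>R iexp (-z/s * x)) \<partial>lborel)
     = complex_of_real (sqrt (2*pi)) * char std_normal_distribution (-z/s)"
    unfolding c2 by (rule integral_mult_right_zero)
  also have "\<dots> = complex_of_real (sqrt (2*pi)) * complex_of_real (exp(-((-z/s)\<^sup>2)/2))"
    by (simp only: c)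
  also have "\<bar>1/s\<bar> *\<^sub>R (complex_of_real (sqrt (2*pi)) * complex_of_real (exp(-((-z/s)\<^sup>2)/2)))
     = complex_of_real (2*pi * normal_density 0 s z)"
  proof -
    have e: "exp(-((-z/s)\<^sup>2)/2) = exp (-(z - 0)\<^sup>2/ (2 * s\<^sup>2))" by (simp add: power_divide)
    have h: "sqrt (2*pi) / s = 2*pi * (1 / sqrt (2 * pi * s\<^sup>2))" using s
      by (simp add: real_sqrt_mult field_simps)
    have r: "\<bar>1/s\<bar> * (sqrt (2*pi) * exp(-((-z/s)\<^sup>2)/2)) = 2*pi * normal_density 0 s z"
      unfolding e normal_density_def using s h by (simp add: field_simps)
    show ?thesis using r by (simp add: scaleR_conv_of_real flip: of_real_mult of_real_divide)
  qed
  finally show ?thesis .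
qed

lemma integrable_prod_norm:
  fixes g h :: "real \<Rightarrow> complex"
  assumes g: "integrable lborel g" and h: "integrable lborel h"
  shows "integrable (lborel \<Otimes>\<^sub>M lborel) (\<lambda>(a,b). cmod (g a) * cmod (h b))"
proof (rule integrableI_bounded)
  have [measurable]: "g \<in> borel_measurable borel" "h \<in> borel_measurable borel"
    using g h by auto
  show "(\<lambda>(a,b). cmod (g a) * cmod (h b)) \<in> borel_measurable (lborel \<Otimes>\<^sub>M lborel)" by measurable
  have "(\<integral>\<^sup>+ p. ennreal (norm ((\<lambda>(a,b). cmod (g a) * cmod (h b)) p)) \<partial>(lborel \<Otimes>\<^sub>M lborel))
      = (\<integral>\<^sup>+ a. \<integral>\<^sup>+ b. ennreal (cmod (g a)) * ennreal (cmod (h b)) \<partial>lborel \<partial>lborel)"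
    by (subst lborel.nn_integral_fst[symmetric]) (auto simp: ennreal_mult)
  also have "\<dots> = (\<integral>\<^sup>+ a. ennreal (cmod (g a)) * (\<integral>\<^sup>+ b. ennreal (cmod (h b)) \<partial>lborel) \<partial>lborel)"
    by (subst nn_integral_cmult) auto
  also have "\<dots> = (\<integral>\<^sup>+ a. ennreal (cmod (g a)) \<partial>lborel) * (\<integral>\<^sup>+ b. ennreal (cmod (h b)) \<partial>lborel)"
    by (subst mult.commute, subst nn_integral_cmult) (auto simp: mult.commute)
  also have "\<dots> < \<infinity>" using g h unfolding integrable_iff_bounded by (simp add: ennreal_mult_less_top)
  finally show "(\<integral>\<^sup>+ p. ennreal (norm ((\<lambda>(a,b). cmod (g a) * cmod (h b)) p)) \<partial>(lborel \<Otimes>\<^sub>M lborel)) < \<infinity>" .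
qed

lemma swap_L1:
  fixes g h :: "real \<Rightarrow> complex" and k :: "real \<Rightarrow> real \<Rightarrow> complex"
  assumes g: "integrable lborel g" and h: "integrable lborel h"
    and k[measurable]: "case_prod k \<in> borel_measurable (lborel \<Otimes>\<^sub>M lborel)"
    and kb: "\<And>a b. cmod (k a b) \<le> 1"
  shows "(\<integral>a. g a * (\<integral>b. k a b * h b \<partial>lborel) \<partial>lborel)
       = (\<integral>b. h b * (\<integral>a. k a b * g a \<partial>lborel) \<partial>lborel)"
proof -
  have [measurable]: "g \<in> borel_measurable borel" "h \<in> borel_measurable borel"
    using g h by auto
  have F: "integrable (lborel \<Otimes>\<^sub>M lborel) (case_prod (\<lambda>a b. g a * k a b * h b))"
  proof (rule Bochner_Integration.integrable_bound[OF integrable_prod_norm[OF g h]])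
    show "case_prod (\<lambda>a b. g a * k a b * h b) \<in> borel_measurable (lborel \<Otimes>\<^sub>M lborel)"
      by measurable
    show "AE p in lborel \<Otimes>\<^sub>M lborel. norm (case_prod (\<lambda>a b. g a * k a b * h b) p)
        \<le> norm ((\<lambda>(a,b). cmod (g a) * cmod (h b)) p)"
    proof (rule AE_I2)
      fix p show "norm (case_prod (\<lambda>a b. g a * k a b * h b) p)
        \<le> norm ((\<lambda>(a,b). cmod (g a) * cmod (h b)) p)"
      proof (cases p)
        case (Pair a b)
        have "cmod (g a * k a b * h b) = cmod (g a) * cmod (k a b) * cmod (h b)"
          by (simp add: norm_mult)
        also have "\<dots> \<le> cmod (g a) * 1 * cmod (h b)"
          by (intro mult_right_mono mult_left_mono kb) auto
        finally show ?thesis using Pair by simp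
      qed
    qed
  qed
  have Fu: "(\<integral>b. (\<integral>a. g a * k a b * h b \<partial>lborel) \<partial>lborel) = (\<integral>a. (\<integral>b. g a * k a b * h b \<partial>lborel) \<partial>lborel)"
    by (rule lborel_pair.Fubini_integral[OF F])
  have e1: "\<And>a. (\<integral>b. g a * k a b * h b \<partial>lborel) = g a * (\<integral>b. k a b * h b \<partial>lborel)"
    by (simp add: mult.assoc)
  have e2: "\<And>b. (\<integral>a. g a * k a b * h b \<partial>lborel) = h b * (\<integral>a. k a b * g a \<partial>lborel)"
  proof -
    fix b
    have "(\<integral>a. g a * k a b * h b \<partial>lborel) = (\<integral>a. h b * (k a b * g a) \<partial>lborel)"
      by (simp add: ac_simps)
    also have "\<dots> = h b * (\<integral>a. k a b * g a \<partial>lborel)" by simp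
    finally show "(\<integral>a. g a * k a b * h b \<partial>lborel) = h b * (\<integral>a. k a b * g a \<partial>lborel)" .
  qed
  show ?thesis using Fu by (simp only: e1 e2)
qed

definition FT :: "(real \<Rightarrow> complex) \<Rightarrow> real \<Rightarrow> complex" where
  "FT f \<xi> = (\<integral>x. cis (-(x*\<xi>)) * f x \<partial>lborel)"

definition N2 :: "(real \<Rightarrow> complex) \<Rightarrow> ennreal" where
  "N2 f = (\<integral>\<^sup>+x. ennreal ((cmod (f x))\<^sup>2) \<partial>lborel)"

lemma cis_meas[measurable]: "cis \<in> borel_measurable borel"
  by (intro borel_measurable_continuous_onI continuous_intros)

lemma cnj_meas[measurable]: "cnj \<in> borel_measurable borel"
  by (intro borel_measurable_continuous_onI continuous_intros)

lemma of_real_meas[measurable]: "(complex_of_real) \<in> borel_measurable borel"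
  by (intro borel_measurable_continuous_onI continuous_intros)

lemma FT_meas[measurable]:
  fixes f :: "real \<Rightarrow> complex"
  assumes [measurable]: "f \<in> borel_measurable borel"
  shows "FT f \<in> borel_measurable borel"
proof -
  have *: "(\<lambda>(\<xi>, x). cis (-(x*\<xi>)) * f x) \<in> borel_measurable (borel \<Otimes>\<^sub>M borel)"
    by measurable
  have "sets (borel \<Otimes>\<^sub>M lborel) = sets (borel \<Otimes>\<^sub>M (borel :: real measure))"
    by (rule sets_pair_measure_cong) simp_all
  then have "(\<lambda>(\<xi>, x). cis (-(x*\<xi>)) * f x) \<in> borel_measurable (borel \<Otimes>\<^sub>M lborel)"
    using * by (simp cong: measurable_cong_sets)
  then show ?thesis unfolding FT_def
    by (rule lborel.borel_measurable_lebesgue_integral[of "\<lambda>\<xi> x. cis (-(x*\<xi>)) * f x", simplified])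
qed

lemma FT_bound: fixes f :: "real \<Rightarrow> complex" shows "integrable lborel f \<Longrightarrow> cmod (FT f \<xi>) \<le> (\<integral>x. cmod (f x) \<partial>lborel)"
  unfolding FT_def
  by (rule order.trans[OF integral_norm_bound]) (simp add: norm_mult)

lemma w_integrable: fixes s :: real assumes s: "s > 0" shows "integrable lborel (\<lambda>\<xi>. exp (-(s*\<xi>)\<^sup>2/2))"
proof -
  have "integrable lborel (\<lambda>x. sqrt (2*pi) * std_normal_density (0 + s * x))"
    using s by (intro lborel_integrable_real_affine integrable_mult_right) auto
  moreover have "(\<lambda>x. sqrt (2*pi) * std_normal_density (0 + s * x)) = (\<lambda>\<xi>. exp (-(s*\<xi>)\<^sup>2/2))"
    by (auto simp: std_normal_density_def fun_eq_iff)
  ultimately show ?thesis by metis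
qed

lemma K_nn_integral:
  assumes s: "s > 0"
  shows "(\<integral>\<^sup>+y. ennreal (2*pi * normal_density 0 s (x - y)) \<partial>lborel) = ennreal (2*pi)"
    and "(\<integral>\<^sup>+x. ennreal (2*pi * normal_density 0 s (x - y)) \<partial>lborel) = ennreal (2*pi)"
proof -
  have base: "(\<integral>\<^sup>+z. ennreal (2*pi * normal_density 0 s z) \<partial>lborel) = ennreal (2*pi)"
    using s by (subst nn_integral_eq_integral) auto
  have "(\<integral>\<^sup>+z. ennreal (2*pi * normal_density 0 s z) \<partial>lborel)
      = (\<integral>\<^sup>+y. ennreal (2*pi * normal_density 0 s (x + (-1) * y)) \<partial>lborel)"
    using nn_integral_real_affine[of "\<lambda>z. ennreal (2*pi * normal_density 0 s z)" "-1" x] by simp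
  then show "(\<integral>\<^sup>+y. ennreal (2*pi * normal_density 0 s (x - y)) \<partial>lborel) = ennreal (2*pi)"
    using base by simp
  have "(\<integral>\<^sup>+z. ennreal (2*pi * normal_density 0 s z) \<partial>lborel)
      = (\<integral>\<^sup>+x. ennreal (2*pi * normal_density 0 s (-y + 1 * x)) \<partial>lborel)"
    using nn_integral_real_affine[of "\<lambda>z. ennreal (2*pi * normal_density 0 s z)" "1" "-y"] by simp
  then show "(\<integral>\<^sup>+x. ennreal (2*pi * normal_density 0 s (x - y)) \<partial>lborel) = ennreal (2*pi)"
    using base by simp
qed

lemma plancherel_s:
  fixes f :: "real \<Rightarrow> complex" and s :: real
  assumes f: "integrable lborel f" and s: "s > 0"
  shows "(\<integral>\<^sup>+\<xi>. ennreal ((cmod (FT f \<xi>))\<^sup>2 * exp (-(s*\<xi>)\<^sup>2/2)) \<partial>lborel) \<le> 2*pi * N2 f"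
proof -
  define w where "w \<xi> = exp (-(s*\<xi>)\<^sup>2/2)" for \<xi>
  define L where "L = (\<integral>x. cmod (f x) \<partial>lborel)"
  define Kr where "Kr z = 2*pi * normal_density 0 s z" for z
  have fm[measurable]: "f \<in> borel_measurable borel" using f by auto
  have wm[measurable]: "w \<in> borel_measurable borel" unfolding w_def by measurable
  have Krm[measurable]: "Kr \<in> borel_measurable borel" unfolding Kr_def by measurable
  have wi: "integrable lborel w" unfolding w_def by (rule w_integrable[OF s])
  have wpos: "w \<xi> \<ge> 0" for \<xi> unfolding w_def by simp
  have Krpos: "Kr z \<ge> 0" for z unfolding Kr_def by simp
  have FTb: "cmod (FT f \<xi>) \<le> L" for \<xi> unfolding L_def by (rule FT_bound[OF f])
  have L0: "L \<ge> 0" unfolding L_def by simp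
  define \<phi> where "\<phi> \<xi> = cnj (FT f \<xi>) * complex_of_real (w \<xi>)" for \<xi>
  have \<phi>m[measurable]: "\<phi> \<in> borel_measurable borel" unfolding \<phi>_def by measurable
  have \<phi>i: "integrable lborel \<phi>"
  proof (rule Bochner_Integration.integrable_bound[of _ "\<lambda>\<xi>. L * w \<xi>"])
    show "integrable lborel (\<lambda>\<xi>. L * w \<xi>)" using wi by simp
    show "\<phi> \<in> borel_measurable lborel" by simp
    show "AE \<xi> in lborel. norm (\<phi> \<xi>) \<le> norm (L * w \<xi>)"
      using FTb wpos L0 by (auto simp: \<phi>_def norm_mult intro!: mult_right_mono)
  qed
  define \<psi> where "\<psi> x = (\<integral>\<xi>. cis (-(x*\<xi>)) * \<phi> \<xi> \<partial>lborel)" for x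
  have sq_int: "integrable lborel (\<lambda>\<xi>. (cmod (FT f \<xi>))\<^sup>2 * w \<xi>)"
  proof (rule Bochner_Integration.integrable_bound[of _ "\<lambda>\<xi>. L\<^sup>2 * w \<xi>"])
    show "integrable lborel (\<lambda>\<xi>. L\<^sup>2 * w \<xi>)" using wi by simp
    show "(\<lambda>\<xi>. (cmod (FT f \<xi>))\<^sup>2 * w \<xi>) \<in> borel_measurable lborel" by simp
    show "AE \<xi> in lborel. norm ((cmod (FT f \<xi>))\<^sup>2 * w \<xi>) \<le> norm (L\<^sup>2 * w \<xi>)"
      using FTb wpos L0 by (auto simp: abs_mult intro!: mult_right_mono power_mono)
  qed
  have step1: "(\<integral>\<^sup>+\<xi>. ennreal ((cmod (FT f \<xi>))\<^sup>2 * w \<xi>) \<partial>lborel)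
      \<le> ennreal (cmod (\<integral>\<xi>. FT f \<xi> * \<phi> \<xi> \<partial>lborel))"
  proof -
    have "(\<integral>\<^sup>+\<xi>. ennreal ((cmod (FT f \<xi>))\<^sup>2 * w \<xi>) \<partial>lborel)
        = ennreal (\<integral>\<xi>. (cmod (FT f \<xi>))\<^sup>2 * w \<xi> \<partial>lborel)"
      using sq_int wpos by (intro nn_integral_eq_integral) auto
    also have "(\<lambda>\<xi>. FT f \<xi> * \<phi> \<xi>) = (\<lambda>\<xi>. complex_of_real ((cmod (FT f \<xi>))\<^sup>2 * w \<xi>))"
      by (auto simp: \<phi>_def fun_eq_iff mult.assoc simp flip: complex_norm_square)
    then have "(\<integral>\<xi>. FT f \<xi> * \<phi> \<xi> \<partial>lborel)
        = complex_of_real (\<integral>\<xi>. (cmod (FT f \<xi>))\<^sup>2 * w \<xi> \<partial>lborel)"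
      by (simp only: integral_complex_of_real)
    then have "ennreal (\<integral>\<xi>. (cmod (FT f \<xi>))\<^sup>2 * w \<xi> \<partial>lborel)
        \<le> ennreal (cmod (\<integral>\<xi>. FT f \<xi> * \<phi> \<xi> \<partial>lborel))"
      by (simp add: ennreal_leI)
    finally show ?thesis .
  qed
  have step2: "(\<integral>\<xi>. FT f \<xi> * \<phi> \<xi> \<partial>lborel) = (\<integral>x. f x * \<psi> x \<partial>lborel)"
  proof -
    have "(\<integral>\<xi>. FT f \<xi> * \<phi> \<xi> \<partial>lborel) = (\<integral>\<xi>. \<phi> \<xi> * (\<integral>x. cis (-(x*\<xi>)) * f x \<partial>lborel) \<partial>lborel)"
      by (simp add: FT_def mult.commute)
    also have "\<dots> = (\<integral>x. f x * (\<integral>\<xi>. cis (-(x*\<xi>)) * \<phi> \<xi> \<partial>lborel) \<partial>lborel)"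
      by (rule swap_L1[OF \<phi>i f]) (auto simp: measurable_lborel1)
    finally show ?thesis unfolding \<psi>_def .
  qed
  have step3: "\<psi> x = (\<integral>y. cnj (f y) * complex_of_real (Kr (x - y)) \<partial>lborel)" for x
  proof -
    have gi: "integrable lborel (\<lambda>\<xi>. cis (-(x*\<xi>)) * complex_of_real (w \<xi>))"
      by (rule Bochner_Integration.integrable_bound[of _ "\<lambda>\<xi>. w \<xi>"]) (use wi wpos in \<open>auto simp: norm_mult\<close>)
    have hi: "integrable lborel (\<lambda>y. cnj (f y))" using f by simp
    have cnjFT: "cnj (FT f \<xi>) = (\<integral>y. cis (y*\<xi>) * cnj (f y) \<partial>lborel)" for \<xi>
      unfolding FT_def by (subst Bochner_Integration.integral_cnj[symmetric]) (simp add: cis_cnj)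
    have "\<psi> x = (\<integral>\<xi>. (cis (-(x*\<xi>)) * complex_of_real (w \<xi>)) * (\<integral>y. cis (y*\<xi>) * cnj (f y) \<partial>lborel) \<partial>lborel)"
      unfolding \<psi>_def \<phi>_def cnjFT by (simp add: ac_simps)
    also have "\<dots> = (\<integral>y. cnj (f y) * (\<integral>\<xi>. cis (y*\<xi>) * (cis (-(x*\<xi>)) * complex_of_real (w \<xi>)) \<partial>lborel) \<partial>lborel)"
      by (rule swap_L1[OF gi hi]) (auto simp: measurable_lborel1)
    also have "\<dots> = (\<integral>y. cnj (f y) * complex_of_real (Kr (x - y)) \<partial>lborel)"
    proof (rule Bochner_Integration.integral_cong[OF refl])
      fix y
      have "(\<integral>\<xi>. cis (y*\<xi>) * (cis (-(x*\<xi>)) * complex_of_real (w \<xi>)) \<partial>lborel)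
          = (\<integral>\<xi>. cis (-((x-y)*\<xi>)) * complex_of_real (exp (-(s*\<xi>)\<^sup>2/2)) \<partial>lborel)"
        by (simp add: w_def mult.assoc[symmetric] cis_mult algebra_simps)
      also have "\<dots> = complex_of_real (Kr (x - y))"
        unfolding Kr_def by (rule gauss_ft[OF s])
      finally show "cnj (f y) * (\<integral>\<xi>. cis (y*\<xi>) * (cis (-(x*\<xi>)) * complex_of_real (w \<xi>)) \<partial>lborel)
          = cnj (f y) * complex_of_real (Kr (x - y))" by simp
    qed
    finally show ?thesis .
  qed
  have psib: "ennreal (cmod (\<psi> x)) \<le> (\<integral>\<^sup>+y. ennreal (cmod (f y) * Kr (x - y)) \<partial>lborel)" for x
  proof (cases "integrable lborel (\<lambda>y. cnj (f y) * complex_of_real (Kr (x - y)))")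
    case True
    then show ?thesis unfolding step3
      by (rule order.trans[OF integral_norm_bound_ennreal]) (simp add: norm_mult Krpos)
  next
    case False
    then show ?thesis unfolding step3 by (simp add: not_integrable_integral_eq)
  qed
  have step4: "ennreal (cmod (\<integral>x. f x * \<psi> x \<partial>lborel))
      \<le> (\<integral>\<^sup>+x. ennreal (cmod (f x)) * (\<integral>\<^sup>+y. ennreal (cmod (f y) * Kr (x - y)) \<partial>lborel) \<partial>lborel)"
  proof (cases "integrable lborel (\<lambda>x. f x * \<psi> x)")
    case True
    have "ennreal (cmod (\<integral>x. f x * \<psi> x \<partial>lborel)) \<le> (\<integral>\<^sup>+x. ennreal (cmod (f x * \<psi> x)) \<partial>lborel)"
      by (rule integral_norm_bound_ennreal[OF True])
    also have "\<dots> \<le> (\<integral>\<^sup>+x. ennreal (cmod (f x)) * (\<integral>\<^sup>+y. ennreal (cmod (f y) * Kr (x - y)) \<partial>lborel) \<partial>lborel)"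
      by (intro nn_integral_mono) (auto simp: norm_mult ennreal_mult intro!: mult_left_mono psib)
    finally show ?thesis .
  next
    case False
    then show ?thesis by (simp add: not_integrable_integral_eq)
  qed
  have step5: "(\<integral>\<^sup>+x. ennreal (cmod (f x)) * (\<integral>\<^sup>+y. ennreal (cmod (f y) * Kr (x - y)) \<partial>lborel) \<partial>lborel)
      \<le> 2*pi * N2 f"
  proof -
    define T1 where "T1 x y = ennreal ((cmod (f x))\<^sup>2/2 * Kr (x - y))" for x y
    define T2 where "T2 x y = ennreal ((cmod (f y))\<^sup>2/2 * Kr (x - y))" for x y
    have T1m[measurable]: "case_prod T1 \<in> borel_measurable (lborel \<Otimes>\<^sub>M lborel)"
      unfolding T1_def by measurable
    have T2m[measurable]: "case_prod T2 \<in> borel_measurable (lborel \<Otimes>\<^sub>M lborel)"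
      unfolding T2_def by measurable
    have "(\<integral>\<^sup>+x. ennreal (cmod (f x)) * (\<integral>\<^sup>+y. ennreal (cmod (f y) * Kr (x - y)) \<partial>lborel) \<partial>lborel)
        = (\<integral>\<^sup>+x. (\<integral>\<^sup>+y. ennreal (cmod (f x)) * ennreal (cmod (f y) * Kr (x - y)) \<partial>lborel) \<partial>lborel)"
      by (intro nn_integral_cong, subst nn_integral_cmult) auto
    also have "\<dots> \<le> (\<integral>\<^sup>+x. (\<integral>\<^sup>+y. T1 x y + T2 x y \<partial>lborel) \<partial>lborel)"
    proof (intro nn_integral_mono)
      fix x y
      have "cmod (f x) * cmod (f y) \<le> (cmod (f x))\<^sup>2/2 + (cmod (f y))\<^sup>2/2"
        using sum_squares_bound[of "cmod (f x)" "cmod (f y)"] by simp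
      then have ab: "(cmod (f x) * cmod (f y)) * Kr (x - y) \<le> ((cmod (f x))\<^sup>2/2 + (cmod (f y))\<^sup>2/2) * Kr (x - y)"
        by (rule mult_right_mono[OF _ Krpos])
      have "cmod (f x) * (cmod (f y) * Kr (x - y)) \<le> (cmod (f x))\<^sup>2/2 * Kr (x - y) + (cmod (f y))\<^sup>2/2 * Kr (x - y)"
        using ab by (simp only: mult.assoc distrib_right)
      then show "ennreal (cmod (f x)) * ennreal (cmod (f y) * Kr (x - y)) \<le> T1 x y + T2 x y"
        unfolding T1_def T2_def using Krpos[of "x-y"]
        by (simp add: ennreal_mult[symmetric] ennreal_plus[symmetric] ennreal_leI del: ennreal_plus)
    qed
    also have "\<dots> = (\<integral>\<^sup>+x. (\<integral>\<^sup>+y. T1 x y \<partial>lborel) \<partial>lborel) + (\<integral>\<^sup>+x. (\<integral>\<^sup>+y. T2 x y \<partial>lborel) \<partial>lborel)"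
      by (subst nn_integral_add[symmetric]) (auto intro!: nn_integral_cong nn_integral_add)
    also have "(\<integral>\<^sup>+x. (\<integral>\<^sup>+y. T2 x y \<partial>lborel) \<partial>lborel) = (\<integral>\<^sup>+y. (\<integral>\<^sup>+x. T2 x y \<partial>lborel) \<partial>lborel)"
      by (rule lborel_pair.Fubini'[symmetric]) simp
    also have "(\<integral>\<^sup>+x. (\<integral>\<^sup>+y. T1 x y \<partial>lborel) \<partial>lborel) = (\<integral>\<^sup>+x. ennreal pi * ennreal ((cmod (f x))\<^sup>2) \<partial>lborel)"
    proof (rule nn_integral_cong)
      fix x
      have "(\<integral>\<^sup>+y. T1 x y \<partial>lborel) = ennreal ((cmod (f x))\<^sup>2/2) * (\<integral>\<^sup>+y. ennreal (Kr (x - y)) \<partial>lborel)"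
        unfolding T1_def by (subst nn_integral_cmult[symmetric]) (auto intro!: nn_integral_cong simp: ennreal_mult[symmetric] Krpos)
      also have "\<dots> = ennreal ((cmod (f x))\<^sup>2/2) * ennreal (2*pi)"
        unfolding Kr_def using K_nn_integral(1)[OF s] by simp
      also have "\<dots> = ennreal pi * ennreal ((cmod (f x))\<^sup>2)"
        by (simp add: ennreal_mult[symmetric])
      finally show "(\<integral>\<^sup>+y. T1 x y \<partial>lborel) = ennreal pi * ennreal ((cmod (f x))\<^sup>2)" .
    qed
    also have "(\<integral>\<^sup>+y. (\<integral>\<^sup>+x. T2 x y \<partial>lborel) \<partial>lborel) = (\<integral>\<^sup>+y. ennreal pi * ennreal ((cmod (f y))\<^sup>2) \<partial>lborel)"
    proof (rule nn_integral_cong)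
      fix y
      have "(\<integral>\<^sup>+x. T2 x y \<partial>lborel) = ennreal ((cmod (f y))\<^sup>2/2) * (\<integral>\<^sup>+x. ennreal (Kr (x - y)) \<partial>lborel)"
        unfolding T2_def by (subst nn_integral_cmult[symmetric]) (auto intro!: nn_integral_cong simp: ennreal_mult[symmetric] Krpos)
      also have "\<dots> = ennreal ((cmod (f y))\<^sup>2/2) * ennreal (2*pi)"
        unfolding Kr_def using K_nn_integral(2)[OF s] by simp
      also have "\<dots> = ennreal pi * ennreal ((cmod (f y))\<^sup>2)"
        by (simp add: ennreal_mult[symmetric])
      finally show "(\<integral>\<^sup>+x. T2 x y \<partial>lborel) = ennreal pi * ennreal ((cmod (f y))\<^sup>2)" .
    qed
    also have "(\<integral>\<^sup>+x. ennreal pi * ennreal ((cmod (f x))\<^sup>2) \<partial>lborel) + (\<integral>\<^sup>+y. ennreal pi * ennreal ((cmod (f y))\<^sup>2) \<partial>lborel)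
        = 2*pi * N2 f"
    proof -
      have e: "(\<integral>\<^sup>+x. ennreal pi * ennreal ((cmod (f x))\<^sup>2) \<partial>lborel) = ennreal pi * N2 f"
        unfolding N2_def by (rule nn_integral_cmult) simp
      have "ennreal (2*pi) = ennreal pi + ennreal pi" by (subst mult_2, rule ennreal_plus) auto
      then show ?thesis unfolding e by (simp only: distrib_right)
    qed
    finally show ?thesis .
  qed
  have "(\<integral>\<^sup>+\<xi>. ennreal ((cmod (FT f \<xi>))\<^sup>2 * exp (-(s*\<xi>)\<^sup>2/2)) \<partial>lborel)
     = (\<integral>\<^sup>+\<xi>. ennreal ((cmod (FT f \<xi>))\<^sup>2 * w \<xi>) \<partial>lborel)" by (simp add: w_def)
  also note step1
  also note step2
  also note step4
  also note step5
  finally show ?thesis .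
qed

lemma plancherel:
  fixes f :: "real \<Rightarrow> complex"
  assumes f: "integrable lborel f"
  shows "N2 (FT f) \<le> 2*pi * N2 f"
proof -
  have fm[measurable]: "f \<in> borel_measurable borel" using f by auto
  define u where "u n \<xi> = ennreal ((cmod (FT f \<xi>))\<^sup>2 * exp (-(inverse (real (Suc n))*\<xi>)\<^sup>2/2))" for n \<xi>
  have um: "u n \<in> borel_measurable lborel" for n unfolding u_def by measurable
  have lim: "(\<lambda>n. u n \<xi>) \<longlonglongrightarrow> ennreal ((cmod (FT f \<xi>))\<^sup>2)" for \<xi>
  proof -
    have "(\<lambda>n. (cmod (FT f \<xi>))\<^sup>2 * exp (-(inverse (real (Suc n))*\<xi>)\<^sup>2/2))
        \<longlonglongrightarrow> (cmod (FT f \<xi>))\<^sup>2 * exp (-(0*\<xi>)\<^sup>2/2)"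
      by (intro tendsto_intros LIMSEQ_inverse_real_of_nat) simp
    then show ?thesis unfolding u_def by (intro tendsto_ennrealI) (simp add: power2_eq_square)
  qed
  have "N2 (FT f) = (\<integral>\<^sup>+\<xi>. liminf (\<lambda>n. u n \<xi>) \<partial>lborel)"
    unfolding N2_def by (intro nn_integral_cong) (simp add: lim_imp_Liminf[OF _ lim])
  also have "\<dots> \<le> liminf (\<lambda>n. integral\<^sup>N lborel (u n))"
    by (rule nn_integral_liminf[OF um])
  also have "\<dots> \<le> limsup (\<lambda>n. integral\<^sup>N lborel (u n))"
    by (rule Liminf_le_Limsup) simp
  also have "\<dots> \<le> 2*pi * N2 f"
  proof (rule Limsup_bounded, rule always_eventually, rule allI)
    fix n
    show "integral\<^sup>N lborel (u n) \<le> 2*pi * N2 f"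
      unfolding u_def by (rule plancherel_s[OF f]) simp
  qed
  finally show ?thesis .
qed

lemma sq_add_le: "(cmod (a + b))\<^sup>2 \<le> 2 * (cmod a)\<^sup>2 + 2 * (cmod b)\<^sup>2"
proof -
  have "cmod (a + b) \<le> cmod a + cmod b" by (rule norm_triangle_ineq)
  then have "(cmod (a + b))\<^sup>2 \<le> (cmod a + cmod b)\<^sup>2" by (simp add: power_mono)
  also have "\<dots> \<le> 2 * (cmod a)\<^sup>2 + 2 * (cmod b)\<^sup>2"
    using sum_squares_bound[of "cmod a" "cmod b"] by (simp add: power2_sum)
  finally show ?thesis .
qed

lemma N2_add:
  fixes f g :: "real \<Rightarrow> complex"
  assumes [measurable]: "f \<in> borel_measurable borel" "g \<in> borel_measurable borel"
  shows "N2 (\<lambda>x. f x + g x) \<le> 2 * N2 f + 2 * N2 g"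
proof -
  have "N2 (\<lambda>x. f x + g x) \<le> (\<integral>\<^sup>+x. ennreal 2 * ennreal ((cmod (f x))\<^sup>2) + ennreal 2 * ennreal ((cmod (g x))\<^sup>2) \<partial>lborel)"
    unfolding N2_def
  proof (intro nn_integral_mono)
    fix x
    have "ennreal ((cmod (f x + g x))\<^sup>2) \<le> ennreal (2 * (cmod (f x))\<^sup>2 + 2 * (cmod (g x))\<^sup>2)"
      by (rule ennreal_leI[OF sq_add_le])
    also have "\<dots> = ennreal 2 * ennreal ((cmod (f x))\<^sup>2) + ennreal 2 * ennreal ((cmod (g x))\<^sup>2)"
        by (subst ennreal_plus; simp add: ennreal_mult)
    finally show "ennreal ((cmod (f x + g x))\<^sup>2) \<le> ennreal 2 * ennreal ((cmod (f x))\<^sup>2) + ennreal 2 * ennreal ((cmod (g x))\<^sup>2)" .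
  qed
  also have "\<dots> = 2 * N2 f + 2 * N2 g"
    unfolding N2_def by (subst nn_integral_add) (auto simp: nn_integral_cmult)
  finally show ?thesis .
qed

lemma N2_diff:
  fixes f g :: "real \<Rightarrow> complex"
  assumes [measurable]: "f \<in> borel_measurable borel" "g \<in> borel_measurable borel"
  shows "N2 (\<lambda>x. f x - g x) \<le> 2 * N2 f + 2 * N2 g"
proof -
  have "N2 (\<lambda>x. f x - g x) = N2 (\<lambda>x. f x + (- g x))" by simp
  also have "\<dots> \<le> 2 * N2 f + 2 * N2 (\<lambda>x. - g x)" by (rule N2_add) auto
  also have "N2 (\<lambda>x. - g x) = N2 g" unfolding N2_def by simp
  finally show ?thesis .
qed

lemma N2_sym: "N2 (\<lambda>x. f x - g x) = N2 (\<lambda>x. g x - f x)"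
  unfolding N2_def by (simp add: norm_minus_commute)

lemma N2_tri3:
  fixes f g h :: "real \<Rightarrow> complex"
  assumes [measurable]: "f \<in> borel_measurable borel" "g \<in> borel_measurable borel" "h \<in> borel_measurable borel"
  shows "N2 (\<lambda>x. f x - h x) \<le> 2 * N2 (\<lambda>x. f x - g x) + 2 * N2 (\<lambda>x. g x - h x)"
  using N2_add[of "\<lambda>x. f x - g x" "\<lambda>x. g x - h x"] by simp

lemma L2_unique:
  fixes F F' :: "real \<Rightarrow> complex" and t :: "real \<Rightarrow> real \<Rightarrow> complex"
  assumes [measurable]: "F \<in> borel_measurable borel" "F' \<in> borel_measurable borel"
    and tm[measurable]: "\<And>R. t R \<in> borel_measurable borel"
    and l1: "((\<lambda>R. N2 (\<lambda>x. F x - t R x)) \<longlongrightarrow> 0) at_top"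
    and l2: "((\<lambda>R. N2 (\<lambda>x. F' x - t R x)) \<longlongrightarrow> 0) at_top"
  shows "AE x in lborel. F x = F' x"
proof -
  have le: "N2 (\<lambda>x. F x - F' x) \<le> 2 * N2 (\<lambda>x. F x - t R x) + 2 * N2 (\<lambda>x. F' x - t R x)" for R
    using N2_tri3[of F "t R" F'] N2_sym[of "t R" F'] by simp
  have "((\<lambda>R. 2 * N2 (\<lambda>x. F x - t R x) + 2 * N2 (\<lambda>x. F' x - t R x)) \<longlongrightarrow> 2 * 0 + 2 * 0) at_top"
    by (intro tendsto_intros l1 l2) auto
  then have "N2 (\<lambda>x. F x - F' x) \<le> 0"
    by (intro tendsto_le[OF _ _ tendsto_const]) (auto simp: le)
  then have "N2 (\<lambda>x. F x - F' x) = 0" by simp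
  then have "AE x in lborel. ennreal ((cmod (F x - F' x))\<^sup>2) = 0"
    unfolding N2_def by (subst nn_integral_0_iff_AE[symmetric]) auto
  then show ?thesis by eventually_elim simp
qed

lemma trunc_integrable:
  fixes u :: "real \<Rightarrow> complex"
  assumes u: "is_L2 u"
  shows "integrable lborel (\<lambda>x. indicator {-R..R} x *\<^sub>R u x)"
proof -
  have [measurable]: "u \<in> borel_measurable borel" using u unfolding is_L2_def by simp
  have ui: "integrable lborel (\<lambda>x. (cmod (u x))\<^sup>2)" using u unfolding is_L2_def by simp
  show ?thesis
  proof (rule Bochner_Integration.integrable_bound[of _ "\<lambda>x. indicator {-R..R} x + (cmod (u x))\<^sup>2"])
    show "integrable lborel (\<lambda>x. indicator {-R..R} x + (cmod (u x))\<^sup>2 :: real)"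
      using ui by (intro Bochner_Integration.integrable_add integrable_real_indicator) (auto, cases "-R \<le> R", auto)
    show "(\<lambda>x. indicator {-R..R} x *\<^sub>R u x) \<in> borel_measurable lborel" by simp
    show "AE x in lborel. norm (indicator {- R..R} x *\<^sub>R u x) \<le> norm (indicator {-R..R} x + (cmod (u x))\<^sup>2 :: real)"
    proof (rule AE_I2)
      fix x
      have "cmod (u x) \<le> 1 + (cmod (u x))\<^sup>2"
      proof -
        have "0 \<le> (cmod (u x) - 1)\<^sup>2" by simp
        then have "0 \<le> cmod (u x) * cmod (u x) - 2 * cmod (u x) + 1" by (simp add: power2_eq_square algebra_simps)
        then show ?thesis using norm_ge_zero[of "u x"] unfolding power2_eq_square by linarith
      qed
      then show "norm (indicator {- R..R} x *\<^sub>R u x) \<le> norm (indicator {-R..R} x + (cmod (u x))\<^sup>2 :: real)"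
        by (auto simp: indicator_def)
    qed
  qed
qed

lemma trunc_tail:
  fixes u :: "real \<Rightarrow> complex"
  assumes u: "is_L2 u"
  shows "((\<lambda>R. N2 (\<lambda>x. u x - indicator {-R..R} x *\<^sub>R u x)) \<longlongrightarrow> 0) at_top"
proof -
  have [measurable]: "u \<in> borel_measurable borel" using u unfolding is_L2_def by simp
  have ui: "integrable lborel (\<lambda>x. (cmod (u x))\<^sup>2)" using u unfolding is_L2_def by simp
  define s where "s R x = (cmod (u x))\<^sup>2 * (1 - indicator {-R..R} x)" for R x
  have sm[measurable]: "s R \<in> borel_measurable borel" for R unfolding s_def by measurable
  have sb: "0 \<le> s R x" "s R x \<le> (cmod (u x))\<^sup>2" for R x unfolding s_def by (auto simp: indicator_def)
  have si: "integrable lborel (s R)" for R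
    by (rule Bochner_Integration.integrable_bound[OF ui]) (use sb in auto)
  have eq: "N2 (\<lambda>x. u x - indicator {-R..R} x *\<^sub>R u x) = ennreal (\<integral>x. s R x \<partial>lborel)" for R
  proof -
    have "N2 (\<lambda>x. u x - indicator {-R..R} x *\<^sub>R u x) = (\<integral>\<^sup>+x. ennreal (s R x) \<partial>lborel)"
      unfolding N2_def s_def by (intro nn_integral_cong) (auto simp: indicator_def)
    also have "\<dots> = ennreal (\<integral>x. s R x \<partial>lborel)"
      using si sb by (intro nn_integral_eq_integral) auto
    finally show ?thesis .
  qed
  have p4: "AE x in lborel. ((\<lambda>i. s i x) \<longlongrightarrow> 0) at_top"
  proof (rule AE_I2)
    fix x
    have "eventually (\<lambda>R. s R x = 0) at_top"
      using eventually_ge_at_top[of "\<bar>x\<bar>"] by eventually_elim (auto simp: s_def indicator_def)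
    then show "((\<lambda>i. s i x) \<longlongrightarrow> 0) at_top" by (rule tendsto_eventually)
  qed
  have p5: "\<forall>\<^sub>F i in at_top. AE x in lborel. norm (s i x) \<le> (cmod (u x))\<^sup>2"
    using sb by auto
  have p2: "\<And>t. s t \<in> borel_measurable lborel" by simp
  have p1: "(\<lambda>x. 0::real) \<in> borel_measurable lborel" by simp
  have "((\<lambda>R. \<integral>x. s R x \<partial>lborel) \<longlongrightarrow> (\<integral>x. 0 \<partial>lborel)) at_top"
    using integral_dominated_convergence_at_top[OF p1 p2 ui p4 p5] by simp
  then have "((\<lambda>R. ennreal (\<integral>x. s R x \<partial>lborel)) \<longlongrightarrow> ennreal 0) at_top"
    by (intro tendsto_ennrealI) simp
  then show ?thesis unfolding eq by simp
qed

lemma fourier_trunc_FT: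
  "fourier_trunc u R = FT (\<lambda>x. indicator {-R..R} x *\<^sub>R u x)"
  unfolding fourier_trunc_def FT_def set_lebesgue_integral_def
  by (auto intro!: Bochner_Integration.integral_cong simp: indicator_def fun_eq_iff)

lemma abs_le_amgm:
  fixes h :: real and k :: nat
  shows "\<bar>h\<bar> \<le> (2^k * h\<^sup>2 + (1/2)^k) / 2"
proof -
  have p: "(0::real) < 2^k" by simp
  have "0 \<le> (2^k * \<bar>h\<bar> - 1)\<^sup>2" by simp
  then have "0 \<le> (2^k)*(2^k) * h\<^sup>2 - 2 * 2^k * \<bar>h\<bar> + (1::real)"
    by (simp add: power2_eq_square algebra_simps)
  then have "0 \<le> ((2^k)*(2^k) * h\<^sup>2 - 2 * 2^k * \<bar>h\<bar> + 1) / 2^k" using p by simp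
  also have "((2^k)*(2^k) * h\<^sup>2 - 2 * 2^k * \<bar>h\<bar> + 1) / 2^k = 2^k * h\<^sup>2 - 2 * \<bar>h\<bar> + (1/2)^k"
    using p by (simp add: field_simps power_one_over)
  finally show ?thesis by simp
qed

lemma L2_complete:
  fixes t :: "real \<Rightarrow> real \<Rightarrow> complex" and a :: "real \<Rightarrow> ennreal"
  assumes tm[measurable]: "\<And>R. t R \<in> borel_measurable borel"
    and cauchy: "\<And>R R'. N2 (\<lambda>x. t R x - t R' x) \<le> a R + a R'"
    and a0: "(a \<longlongrightarrow> 0) at_top"
  shows "\<exists>F. F \<in> borel_measurable borel \<and> ((\<lambda>R. N2 (\<lambda>x. F x - t R x)) \<longlongrightarrow> 0) at_top"
proof -
  define e :: "nat \<Rightarrow> real" where "e k = (1/8)^k" for k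
  have e_pos: "0 < e k" for k unfolding e_def by simp
  have e_mono: "j \<le> k \<Longrightarrow> e k \<le> e j" for j k unfolding e_def by (rule power_decreasing) auto
  have "\<forall>k. \<exists>R0. \<forall>R\<ge>R0. a R < ennreal (e k)"
  proof
    fix k
    have "eventually (\<lambda>R. a R < ennreal (e k)) at_top"
      using a0 e_pos[of k] by (intro order_tendstoD(2)) auto
    then show "\<exists>R0. \<forall>R\<ge>R0. a R < ennreal (e k)" by (simp add: eventually_at_top_linorder)
  qed
  then obtain T where T: "\<And>k R. R \<ge> T k \<Longrightarrow> a R < ennreal (e k)" by metis
  have aT: "a (T k) \<le> ennreal (e k)" for k using T[of k "T k"] by simp
  define h where "h k x = t (T (Suc k)) x - t (T k) x" for k x
  have hm[measurable]: "h k \<in> borel_measurable borel" for k unfolding h_def by measurable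
  have Nh: "N2 (h k) \<le> ennreal (2 * e k)" for k
  proof -
    have "N2 (h k) \<le> a (T (Suc k)) + a (T k)" unfolding h_def by (rule cauchy)
    also have "\<dots> \<le> ennreal (e (Suc k)) + ennreal (e k)" by (intro add_mono aT)
    also have "\<dots> \<le> ennreal (e k) + ennreal (e k)" by (intro add_mono ennreal_leI e_mono) auto
    also have "\<dots> = ennreal (2 * e k)" using e_pos[of k] by (simp add: ennreal_plus[symmetric] del: ennreal_plus)
    finally show ?thesis .
  qed
  define M where "M x = (\<Sum>k. ennreal (2^k * (cmod (h k x))\<^sup>2))" for x
  have Mm[measurable]: "M \<in> borel_measurable lborel" unfolding M_def by measurable
  have intM: "(\<integral>\<^sup>+x. M x \<partial>lborel) \<noteq> \<infinity>"
  proof -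
    have "(\<integral>\<^sup>+x. M x \<partial>lborel) = (\<Sum>k. \<integral>\<^sup>+x. ennreal (2^k * (cmod (h k x))\<^sup>2) \<partial>lborel)"
      unfolding M_def by (rule nn_integral_suminf) simp
    also have "\<dots> \<le> (\<Sum>k. ennreal (2 * (1/4)^k))"
    proof (rule suminf_le)
      fix k
      have "(\<integral>\<^sup>+x. ennreal (2^k * (cmod (h k x))\<^sup>2) \<partial>lborel) = ennreal (2^k) * N2 (h k)"
        unfolding N2_def by (subst nn_integral_cmult[symmetric]) (auto simp: ennreal_mult)
      also have "\<dots> \<le> ennreal (2^k) * ennreal (2 * e k)" by (intro mult_left_mono Nh) auto
      also have "\<dots> = ennreal (2 * (1/4)^k)"
        unfolding e_def by (simp add: ennreal_mult[symmetric] power_one_over field_simps flip: power_mult_distrib)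
      finally show "(\<integral>\<^sup>+x. ennreal (2^k * (cmod (h k x))\<^sup>2) \<partial>lborel) \<le> ennreal (2 * (1/4)^k)" .
    qed auto
    also have "\<dots> = ennreal (\<Sum>k. 2 * (1/4::real)^k)"
    proof (rule suminf_ennreal2)
      show "summable (\<lambda>k. 2 * (1/4::real)^k)" by (intro summable_mult summable_geometric) simp
    qed simp
    also have "\<dots> < \<infinity>" by simp
    finally show ?thesis by simp
  qed
  have AEfin: "AE x in lborel. M x \<noteq> \<infinity>"
    by (rule nn_integral_PInf_AE[OF Mm intM])
  have conv: "convergent (\<lambda>n. t (T n) x)" if Mx: "M x \<noteq> \<infinity>" for x
  proof -
    have s1: "summable (\<lambda>k. 2^k * (cmod (h k x))\<^sup>2)"
      using Mx unfolding M_def by (intro summable_suminf_not_top) auto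
    have s2: "summable (\<lambda>k. norm (h k x))"
    proof (rule summable_comparison_test')
      show "summable (\<lambda>k. (2^k * (cmod (h k x))\<^sup>2 + (1/2)^k) / 2)"
        using s1 by (intro summable_divide summable_add) auto
      show "norm (norm (h k x)) \<le> (2^k * (cmod (h k x))\<^sup>2 + (1/2)^k) / 2" for k
        using abs_le_amgm[of "cmod (h k x)" k] by simp
    qed
    then have "summable (\<lambda>k. h k x)" by (rule summable_norm_cancel)
    then have "convergent (\<lambda>n. \<Sum>k<n. h k x)" by (simp add: summable_iff_convergent)
    then have "convergent (\<lambda>n. (\<Sum>k<n. h k x) + t (T 0) x)"
      by (intro convergent_add convergent_const)
    moreover have "(\<Sum>k<n. h k x) + t (T 0) x = t (T n) x" for n
      unfolding h_def by (subst sum_lessThan_telescope) simp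
    ultimately show ?thesis by simp
  qed
  define F where "F x = lim (\<lambda>n. t (T n) x)" for x
  have Fm[measurable]: "F \<in> borel_measurable borel" unfolding F_def by measurable
  have Flim: "AE x in lborel. (\<lambda>n. t (T n) x) \<longlonglongrightarrow> F x"
    using AEfin by eventually_elim (use conv in \<open>auto simp: F_def convergent_LIMSEQ_iff\<close>)
  have NFj: "N2 (\<lambda>x. F x - t (T j) x) \<le> ennreal (2 * e j)" for j
  proof -
    define v where "v k x = ennreal ((cmod (t (T k) x - t (T j) x))\<^sup>2)" for k x
    have vm: "v k \<in> borel_measurable lborel" for k unfolding v_def by measurable
    have "N2 (\<lambda>x. F x - t (T j) x) = (\<integral>\<^sup>+x. liminf (\<lambda>k. v k x) \<partial>lborel)"
      unfolding N2_def
    proof (rule nn_integral_cong_AE)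
      show "AE x in lborel. ennreal ((cmod (F x - t (T j) x))\<^sup>2) = liminf (\<lambda>k. v k x)"
        using Flim
      proof eventually_elim
        case (elim x)
        have "(\<lambda>k. v k x) \<longlonglongrightarrow> ennreal ((cmod (F x - t (T j) x))\<^sup>2)"
          unfolding v_def by (intro tendsto_intros elim)
        then show ?case by (simp add: lim_imp_Liminf)
      qed
    qed
    also have "\<dots> \<le> liminf (\<lambda>k. integral\<^sup>N lborel (v k))"
      by (rule nn_integral_liminf[OF vm])
    also have "\<dots> \<le> limsup (\<lambda>k. integral\<^sup>N lborel (v k))"
      by (rule Liminf_le_Limsup) simp
    also have "\<dots> \<le> ennreal (2 * e j)"
    proof (rule Limsup_bounded)
      show "eventually (\<lambda>k. integral\<^sup>N lborel (v k) \<le> ennreal (2 * e j)) sequentially"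
        using eventually_ge_at_top[of j]
      proof eventually_elim
        case (elim k)
        have "integral\<^sup>N lborel (v k) = N2 (\<lambda>x. t (T k) x - t (T j) x)"
          unfolding v_def N2_def ..
        also have "\<dots> \<le> a (T k) + a (T j)" by (rule cauchy)
        also have "\<dots> \<le> ennreal (e j) + ennreal (e j)"
          using aT[of k] aT[of j] ennreal_leI[OF e_mono[OF elim]]
          by (intro add_mono) auto
        also have "\<dots> = ennreal (2 * e j)" using e_pos[of j]
          by (simp add: ennreal_plus[symmetric] del: ennreal_plus)
        finally show ?case .
      qed
    qed
    finally show ?thesis .
  qed
  have NFR: "N2 (\<lambda>x. F x - t R x) \<le> ennreal (8 * e j)" if R: "R \<ge> T j" for j R
  proof -
    have "N2 (\<lambda>x. F x - t R x) \<le> 2 * N2 (\<lambda>x. F x - t (T j) x) + 2 * N2 (\<lambda>x. t (T j) x - t R x)"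
      by (rule N2_tri3) auto
    also have "\<dots> \<le> 2 * ennreal (2 * e j) + 2 * (a (T j) + a R)"
      by (intro add_mono mult_left_mono NFj cauchy) auto
    also have "\<dots> \<le> 2 * ennreal (2 * e j) + 2 * (ennreal (e j) + ennreal (e j))"
      using aT[of j] T[OF R] by (intro add_mono mult_left_mono) auto
    also have "\<dots> = ennreal (2*(2*e j)) + ennreal (2*(2*e j))"
    proof -
      have x: "ennreal (2*(2*e j)) = 2 * ennreal (2*e j)" using e_pos[of j] by (subst ennreal_mult) auto
      have y: "ennreal (e j) + ennreal (e j) = ennreal (2*e j)"
        using e_pos[of j] by (subst ennreal_plus[symmetric]) auto
      show ?thesis unfolding x y ..
    qed
    also have "\<dots> = ennreal (8 * e j)"
      using e_pos[of j] by (subst ennreal_plus[symmetric]) auto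
    finally show ?thesis .
  qed
  have "((\<lambda>R. N2 (\<lambda>x. F x - t R x)) \<longlongrightarrow> 0) at_top"
  proof (rule order_tendstoI)
    fix y :: ennreal assume "y < 0" then show "eventually (\<lambda>R. y < N2 (\<lambda>x. F x - t R x)) at_top" by simp
  next
    fix y :: ennreal assume y: "0 < y"
    have "(\<lambda>j. ennreal (8 * e j)) \<longlonglongrightarrow> ennreal (8 * 0)"
      unfolding e_def by (intro tendsto_intros LIMSEQ_power_zero) simp
    then have "eventually (\<lambda>j. ennreal (8 * e j) < y) sequentially"
      using y by (intro order_tendstoD(2)) auto
    then obtain j where j: "ennreal (8 * e j) < y" by (auto simp: eventually_sequentially)
    show "eventually (\<lambda>R. N2 (\<lambda>x. F x - t R x) < y) at_top"
      using eventually_ge_at_top[of "T j"]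
      by eventually_elim (rule le_less_trans[OF NFR j])
  qed
  then show ?thesis using Fm by blast
qed

lemma cis_mult_integrable:
  fixes g :: "real \<Rightarrow> complex"
  assumes g: "integrable lborel g"
  shows "integrable lborel (\<lambda>x. cis (-(x*\<xi>)) * g x)"
proof -
  have [measurable]: "g \<in> borel_measurable borel" using g by auto
  show ?thesis
    by (rule Bochner_Integration.integrable_bound[OF g]) (auto simp: norm_mult)
qed

lemma FT_diff:
  fixes g h :: "real \<Rightarrow> complex"
  assumes g: "integrable lborel g" and h: "integrable lborel h"
  shows "FT (\<lambda>x. g x - h x) \<xi> = FT g \<xi> - FT h \<xi>"
  unfolding FT_def
  using cis_mult_integrable[OF g, of \<xi>] cis_mult_integrable[OF h, of \<xi>]
  by (simp add: right_diff_distrib)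

lemma is_L2_meas: "is_L2 u \<Longrightarrow> u \<in> borel_measurable borel"
  unfolding is_L2_def by simp

lemma fourier_exists:
  assumes u: "is_L2 u"
  shows "\<exists>F. has_fourier_L2 u F"
proof -
  have um[measurable]: "u \<in> borel_measurable borel" using u by (rule is_L2_meas)
  define t where "t R = fourier_trunc u R" for R
  have tFT: "t R = FT (\<lambda>x. indicator {-R..R} x *\<^sub>R u x)" for R
    unfolding t_def by (rule fourier_trunc_FT)
  have tm: "t R \<in> borel_measurable borel" for R unfolding tFT by measurable
  define a where "a R = 2*pi * (2 * N2 (\<lambda>x. u x - indicator {-R..R} x *\<^sub>R u x))" for R
  have cauchy: "N2 (\<lambda>x. t R x - t R' x) \<le> a R + a R'" for R R'
  proof -
    have "N2 (\<lambda>x. t R x - t R' x) = N2 (FT (\<lambda>x. indicator {-R..R} x *\<^sub>R u x - indicator {-R'..R'} x *\<^sub>R u x))"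
      unfolding tFT
      by (intro arg_cong[where f=N2] ext FT_diff[symmetric] trunc_integrable[OF u])
    also have "\<dots> \<le> 2*pi * N2 (\<lambda>x. indicator {-R..R} x *\<^sub>R u x - indicator {-R'..R'} x *\<^sub>R u x)"
      using trunc_integrable[OF u, of R] trunc_integrable[OF u, of R']
      by (intro plancherel Bochner_Integration.integrable_diff)
    also have "N2 (\<lambda>x. indicator {-R..R} x *\<^sub>R u x - indicator {-R'..R'} x *\<^sub>R u x)
        = N2 (\<lambda>x. (u x - indicator {-R'..R'} x *\<^sub>R u x) - (u x - indicator {-R..R} x *\<^sub>R u x))"
      by simp
    also have "\<dots> \<le> 2 * N2 (\<lambda>x. u x - indicator {-R'..R'} x *\<^sub>R u x) + 2 * N2 (\<lambda>x. u x - indicator {-R..R} x *\<^sub>R u x)"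
      by (rule N2_diff) auto
    finally show ?thesis unfolding a_def
      by (simp add: distrib_left add.commute mult_left_mono)
  qed
  have a0: "(a \<longlongrightarrow> 0) at_top"
  proof -
    have "((\<lambda>R. 2*pi * (2 * N2 (\<lambda>x. u x - indicator {-R..R} x *\<^sub>R u x))) \<longlongrightarrow> ennreal (2*pi) * (2 * (0::ennreal))) at_top"
      by (intro tendsto_intros trunc_tail[OF u]) auto
    then show ?thesis unfolding a_def by simp
  qed
  obtain F where F: "F \<in> borel_measurable borel" "((\<lambda>R. N2 (\<lambda>x. F x - t R x)) \<longlongrightarrow> 0) at_top"
    using L2_complete[OF tm cauchy a0] by blast
  have "has_fourier_L2 u F"
    unfolding has_fourier_L2_def using F unfolding N2_def t_def by simp
  then show ?thesis by blast
qed

lemma fourier_L2_has: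
  assumes u: "is_L2 u"
  shows "has_fourier_L2 u (fourier_L2 u)"
  unfolding fourier_L2_def using fourier_exists[OF u] by (rule someI_ex)

context
  fixes K :: "real \<Rightarrow> real" and B :: real
  assumes Km[measurable]: "K \<in> borel_measurable borel"
    and K0: "\<And>s. 0 \<le> K s" and KB: "\<And>s. K s \<le> B"
    and K1: "(\<integral>\<^sup>+s. ennreal (K s) \<partial>lborel) = 1"
begin

lemma K_shift: "(\<integral>\<^sup>+x. ennreal (K (x - y)) \<partial>lborel) = 1"
  using nn_integral_real_affine[of "\<lambda>z. ennreal (K z)" 1 "-y"] K1 by simp

lemma K_shift': "(\<integral>\<^sup>+y. ennreal (K (x - y)) \<partial>lborel) = 1"
  using nn_integral_real_affine[of "\<lambda>z. ennreal (K z)" "-1" x] K1 by simp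

lemma K_int: "integrable lborel K"
  by (rule integrableI_bounded) (auto simp: K1 K0)

lemma K_shift_int: "integrable lborel (\<lambda>y. K (x - y))"
  using lborel_integrable_real_affine[OF K_int, of "-1" x] by simp

lemma K_shift_integral: "(\<integral>y. K (x - y) \<partial>lborel) = 1"
proof -
  have "ennreal (\<integral>y. K (x - y) \<partial>lborel) = (\<integral>\<^sup>+y. ennreal (K (x - y)) \<partial>lborel)"
    using K_shift_int K0 by (intro nn_integral_eq_integral[symmetric]) auto
  then show ?thesis using K_shift' by simp
qed

lemma B0: "0 \<le> B" using K0[of 0] KB[of 0] by simp

lemma conv_meas[measurable]:
  fixes w :: "real \<Rightarrow> complex"
  assumes [measurable]: "w \<in> borel_measurable borel"
  shows "convolution K w \<in> borel_measurable borel"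
proof -
  have *: "(\<lambda>(x, y). complex_of_real (K (x - y)) * w y) \<in> borel_measurable (borel \<Otimes>\<^sub>M borel)"
    by measurable
  have "sets (borel \<Otimes>\<^sub>M lborel) = sets (borel \<Otimes>\<^sub>M (borel :: real measure))"
    by (rule sets_pair_measure_cong) simp_all
  then have "(\<lambda>(x, y). complex_of_real (K (x - y)) * w y) \<in> borel_measurable (borel \<Otimes>\<^sub>M lborel)"
    using * by (simp cong: measurable_cong_sets)
  then show ?thesis unfolding Defs.convolution_def
    by (rule lborel.borel_measurable_lebesgue_integral[of "\<lambda>x y. complex_of_real (K (x - y)) * w y", simplified])
qed

lemma conv_pt_int:
  fixes w :: "real \<Rightarrow> complex"
  assumes w: "is_L2 w"
  shows "integrable lborel (\<lambda>y. complex_of_real (K (x - y)) * w y)"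
proof -
  have [measurable]: "w \<in> borel_measurable borel" using w by (rule is_L2_meas)
  have wi: "integrable lborel (\<lambda>y. (cmod (w y))\<^sup>2)" using w unfolding is_L2_def by simp
  show ?thesis
  proof (rule Bochner_Integration.integrable_bound[of _ "\<lambda>y. K (x - y) + B * (cmod (w y))\<^sup>2"])
    show "integrable lborel (\<lambda>y. K (x - y) + B * (cmod (w y))\<^sup>2)"
      using K_shift_int wi by (intro Bochner_Integration.integrable_add integrable_mult_right) auto
    show "(\<lambda>y. complex_of_real (K (x - y)) * w y) \<in> borel_measurable lborel" by simp
    show "AE y in lborel. norm (complex_of_real (K (x - y)) * w y) \<le> norm (K (x - y) + B * (cmod (w y))\<^sup>2)"
    proof (rule AE_I2)
      fix y
      have a: "cmod (w y) \<le> 1 + (cmod (w y))\<^sup>2"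
      proof -
        have "0 \<le> (cmod (w y) - 1)\<^sup>2" by simp
        then have "0 \<le> cmod (w y) * cmod (w y) - 2 * cmod (w y) + 1" by (simp add: power2_eq_square algebra_simps)
        then show ?thesis using norm_ge_zero[of "w y"] unfolding power2_eq_square by linarith
      qed
      have "K (x - y) * cmod (w y) \<le> K (x - y) * (1 + (cmod (w y))\<^sup>2)"
        by (rule mult_left_mono[OF a K0])
      also have "\<dots> = K (x - y) + K (x - y) * (cmod (w y))\<^sup>2" by (simp add: algebra_simps)
      also have "\<dots> \<le> K (x - y) + B * (cmod (w y))\<^sup>2"
        by (intro add_left_mono mult_right_mono KB) simp
      finally show "norm (complex_of_real (K (x - y)) * w y) \<le> norm (K (x - y) + B * (cmod (w y))\<^sup>2)"
        using K0[of "x-y"] B0 by (simp add: norm_mult)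
    qed
  qed
qed

lemma conv_pointwise_sq:
  fixes w :: "real \<Rightarrow> complex"
  assumes [measurable]: "w \<in> borel_measurable borel"
  shows "ennreal ((cmod (convolution K w x))\<^sup>2) \<le> (\<integral>\<^sup>+y. ennreal (K (x - y) * (cmod (w y))\<^sup>2) \<partial>lborel)"
proof (cases "(\<integral>\<^sup>+y. ennreal (K (x - y) * (cmod (w y))\<^sup>2) \<partial>lborel) = \<infinity>")
  case True then show ?thesis by simp
next
  case fin: False
  show ?thesis
  proof (cases "integrable lborel (\<lambda>y. complex_of_real (K (x - y)) * w y)")
    case False
    then show ?thesis unfolding Defs.convolution_def by (simp add: not_integrable_integral_eq)
  next
    case True
    define g where "g y = K (x - y)" for y
    have gm[measurable]: "g \<in> borel_measurable borel" unfolding g_def by measurable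
    have g0: "0 \<le> g y" for y unfolding g_def by (rule K0)
    have gi: "integrable lborel g" unfolding g_def by (rule K_shift_int)
    have g1: "(\<integral>y. g y \<partial>lborel) = 1" unfolding g_def by (rule K_shift_integral)
    have i2: "integrable lborel (\<lambda>y. g y * (cmod (w y))\<^sup>2)"
    proof (rule integrableI_bounded)
      show "(\<lambda>y. g y * (cmod (w y))\<^sup>2) \<in> borel_measurable lborel" by simp
      show "(\<integral>\<^sup>+y. ennreal (norm (g y * (cmod (w y))\<^sup>2)) \<partial>lborel) < \<infinity>"
        using fin g0 by (simp add: g_def top.not_eq_extremum abs_mult)
    qed
    have i1: "integrable lborel (\<lambda>y. g y * cmod (w y))"
      using integrable_norm[OF True] g0 by (simp add: g_def norm_mult)
    define m where "m = (\<integral>y. g y * cmod (w y) \<partial>lborel)"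
    define I where "I = (\<integral>y. g y * (cmod (w y))\<^sup>2 \<partial>lborel)"
    have m0: "0 \<le> m" unfolding m_def using g0 by (intro integral_nonneg_AE) auto
    have cm: "cmod (convolution K w x) \<le> m"
      unfolding Defs.convolution_def m_def
      by (rule order.trans[OF integral_norm_bound]) (simp add: norm_mult g_def K0)
    have "0 \<le> (\<integral>y. g y * (cmod (w y) - m)\<^sup>2 \<partial>lborel)"
      using g0 by (intro integral_nonneg_AE) auto
    also have "(\<lambda>y. g y * (cmod (w y) - m)\<^sup>2) = (\<lambda>y. (g y * (cmod (w y))\<^sup>2 - (2*m) * (g y * cmod (w y))) + m\<^sup>2 * g y)"
      by (auto simp: fun_eq_iff power2_eq_square algebra_simps)
    also have "(\<integral>y. (g y * (cmod (w y))\<^sup>2 - (2*m) * (g y * cmod (w y))) + m\<^sup>2 * g y \<partial>lborel)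
        = I - 2*m*m + m\<^sup>2"
      using i1 i2 gi unfolding I_def m_def
      by (simp add: Bochner_Integration.integral_add Bochner_Integration.integral_diff g1)
    finally have mI: "m\<^sup>2 \<le> I" by (simp add: power2_eq_square)
    have "(cmod (convolution K w x))\<^sup>2 \<le> m\<^sup>2" by (rule power_mono[OF cm]) simp
    also note mI
    finally have "ennreal ((cmod (convolution K w x))\<^sup>2) \<le> ennreal I" by (rule ennreal_leI)
    also have "ennreal I = (\<integral>\<^sup>+y. ennreal (K (x - y) * (cmod (w y))\<^sup>2) \<partial>lborel)"
      unfolding I_def using i2 g0 by (subst nn_integral_eq_integral) (auto simp: g_def)
    finally show ?thesis .
  qed
qed

lemma young:
  fixes w :: "real \<Rightarrow> complex"
  assumes [measurable]: "w \<in> borel_measurable borel"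
  shows "N2 (convolution K w) \<le> N2 w"
proof -
  have "N2 (convolution K w) \<le> (\<integral>\<^sup>+x. \<integral>\<^sup>+y. ennreal (K (x - y) * (cmod (w y))\<^sup>2) \<partial>lborel \<partial>lborel)"
    unfolding N2_def by (intro nn_integral_mono conv_pointwise_sq) simp
  also have "\<dots> = (\<integral>\<^sup>+y. \<integral>\<^sup>+x. ennreal (K (x - y) * (cmod (w y))\<^sup>2) \<partial>lborel \<partial>lborel)"
    by (rule lborel_pair.Fubini'[symmetric]) measurable
  also have "\<dots> = (\<integral>\<^sup>+y. ennreal ((cmod (w y))\<^sup>2) * (\<integral>\<^sup>+x. ennreal (K (x - y)) \<partial>lborel) \<partial>lborel)"
    by (intro nn_integral_cong, subst nn_integral_cmult[symmetric]) (auto intro!: nn_integral_cong simp: ennreal_mult[symmetric] K0 mult.commute)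
  also have "\<dots> = N2 w" unfolding N2_def K_shift by simp
  finally show ?thesis .
qed

lemma prod_int:
  fixes w :: "real \<Rightarrow> complex"
  assumes w: "integrable lborel w"
  shows "integrable (lborel \<Otimes>\<^sub>M lborel) (\<lambda>(x, y). K (x - y) * cmod (w y))"
proof (rule integrableI_bounded)
  have [measurable]: "w \<in> borel_measurable borel" using w by auto
  show "(\<lambda>(x, y). K (x - y) * cmod (w y)) \<in> borel_measurable (lborel \<Otimes>\<^sub>M lborel)" by measurable
  have "(\<integral>\<^sup>+p. ennreal (norm ((\<lambda>(x, y). K (x - y) * cmod (w y)) p)) \<partial>(lborel \<Otimes>\<^sub>M lborel))
      = (\<integral>\<^sup>+x. \<integral>\<^sup>+y. ennreal (K (x - y) * cmod (w y)) \<partial>lborel \<partial>lborel)"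
    by (subst lborel.nn_integral_fst[symmetric]) (auto simp: K0 abs_mult)
  also have "\<dots> = (\<integral>\<^sup>+y. \<integral>\<^sup>+x. ennreal (K (x - y) * cmod (w y)) \<partial>lborel \<partial>lborel)"
    by (rule lborel_pair.Fubini'[symmetric]) measurable
  also have "\<dots> = (\<integral>\<^sup>+y. ennreal (cmod (w y)) * (\<integral>\<^sup>+x. ennreal (K (x - y)) \<partial>lborel) \<partial>lborel)"
    by (intro nn_integral_cong, subst nn_integral_cmult[symmetric]) (auto intro!: nn_integral_cong simp: ennreal_mult[symmetric] K0 mult.commute)
  also have "\<dots> = (\<integral>\<^sup>+y. ennreal (cmod (w y)) \<partial>lborel)" unfolding K_shift by simp
  also have "\<dots> < \<infinity>" using w unfolding integrable_iff_bounded by simp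
  finally show "(\<integral>\<^sup>+p. ennreal (norm ((\<lambda>(x, y). K (x - y) * cmod (w y)) p)) \<partial>(lborel \<Otimes>\<^sub>M lborel)) < \<infinity>" .
qed

lemma conv_L1:
  fixes w :: "real \<Rightarrow> complex"
  assumes w: "integrable lborel w"
  shows "integrable lborel (convolution K w)"
proof (rule integrableI_bounded)
  have [measurable]: "w \<in> borel_measurable borel" using w by auto
  show "convolution K w \<in> borel_measurable lborel" by simp
  have "(\<integral>\<^sup>+x. ennreal (norm (convolution K w x)) \<partial>lborel) \<le> (\<integral>\<^sup>+x. \<integral>\<^sup>+y. ennreal (K (x - y) * cmod (w y)) \<partial>lborel \<partial>lborel)"
  proof (rule nn_integral_mono)
    fix x
    show "ennreal (norm (convolution K w x)) \<le> (\<integral>\<^sup>+y. ennreal (K (x - y) * cmod (w y)) \<partial>lborel)"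
    proof (cases "integrable lborel (\<lambda>y. complex_of_real (K (x - y)) * w y)")
      case True
      then show ?thesis unfolding Defs.convolution_def
        by (rule order.trans[OF integral_norm_bound_ennreal]) (simp add: norm_mult K0)
    next
      case False
      then show ?thesis unfolding Defs.convolution_def by (simp add: not_integrable_integral_eq)
    qed
  qed
  also have "\<dots> = (\<integral>\<^sup>+p. ennreal (norm ((\<lambda>(x, y). K (x - y) * cmod (w y)) p)) \<partial>(lborel \<Otimes>\<^sub>M lborel))"
    by (subst lborel.nn_integral_fst[symmetric]) (auto simp: K0 abs_mult)
  also have "\<dots> < \<infinity>" using prod_int[OF w] unfolding integrable_iff_bounded by simp
  finally show "(\<integral>\<^sup>+x. ennreal (norm (convolution K w x)) \<partial>lborel) < \<infinity>" .
qed

lemma conv_FT: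
  fixes w :: "real \<Rightarrow> complex"
  assumes w: "integrable lborel w"
  shows "FT (convolution K w) \<xi> = FT (\<lambda>s. complex_of_real (K s)) \<xi> * FT w \<xi>"
proof -
  have [measurable]: "w \<in> borel_measurable borel" using w by auto
  define \<Phi> where "\<Phi> x y = cis (-(x*\<xi>)) * (complex_of_real (K (x - y)) * w y)" for x y
  have \<Phi>i: "integrable (lborel \<Otimes>\<^sub>M lborel) (case_prod \<Phi>)"
  proof (rule Bochner_Integration.integrable_bound[OF prod_int[OF w]])
    show "case_prod \<Phi> \<in> borel_measurable (lborel \<Otimes>\<^sub>M lborel)" unfolding \<Phi>_def by measurable
    show "AE p in lborel \<Otimes>\<^sub>M lborel. norm (case_prod \<Phi> p) \<le> norm ((\<lambda>(x, y). K (x - y) * cmod (w y)) p)"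
      by (rule AE_I2) (auto simp: \<Phi>_def norm_mult K0 abs_mult split: prod.splits)
  qed
  have "FT (convolution K w) \<xi> = (\<integral>x. (\<integral>y. \<Phi> x y \<partial>lborel) \<partial>lborel)"
    unfolding FT_def Defs.convolution_def \<Phi>_def by simp
  also have "\<dots> = (\<integral>y. (\<integral>x. \<Phi> x y \<partial>lborel) \<partial>lborel)"
    by (rule lborel_pair.Fubini_integral[OF \<Phi>i, symmetric])
  also have "\<dots> = (\<integral>y. FT (\<lambda>s. complex_of_real (K s)) \<xi> * (cis (-(y*\<xi>)) * w y) \<partial>lborel)"
  proof (rule Bochner_Integration.integral_cong[OF refl])
    fix y
    have "(\<integral>x. \<Phi> x y \<partial>lborel) = \<bar>1\<bar> *\<^sub>R (\<integral>z. \<Phi> (y + 1 * z) y \<partial>lborel)"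
      by (rule lborel_integral_real_affine) simp
    also have "(\<lambda>z. \<Phi> (y + 1 * z) y) = (\<lambda>z. (cis (-(y*\<xi>)) * w y) * (cis (-(z*\<xi>)) * complex_of_real (K z)))"
    proof
      fix z
      have e: "cis (-((y + 1 * z)*\<xi>)) = cis (-(y*\<xi>)) * cis (-(z*\<xi>))"
        by (simp add: cis_mult algebra_simps)
      show "\<Phi> (y + 1 * z) y = (cis (-(y*\<xi>)) * w y) * (cis (-(z*\<xi>)) * complex_of_real (K z))"
        unfolding \<Phi>_def e by simp
    qed
    also have "\<bar>1::real\<bar> *\<^sub>R (\<integral>z. (cis (-(y*\<xi>)) * w y) * (cis (-(z*\<xi>)) * complex_of_real (K z)) \<partial>lborel)
        = FT (\<lambda>s. complex_of_real (K s)) \<xi> * (cis (-(y*\<xi>)) * w y)"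
      unfolding FT_def by (simp add: mult.commute)
    finally show "(\<integral>x. \<Phi> x y \<partial>lborel) = FT (\<lambda>s. complex_of_real (K s)) \<xi> * (cis (-(y*\<xi>)) * w y)" .
  qed
  also have "\<dots> = FT (\<lambda>s. complex_of_real (K s)) \<xi> * FT w \<xi>"
    unfolding FT_def by simp
  finally show ?thesis .
qed

lemma conv_diff:
  fixes f g :: "real \<Rightarrow> complex"
  assumes f: "is_L2 f" and g: "is_L2 g"
  shows "convolution K f x - convolution K g x = convolution K (\<lambda>y. f y - g y) x"
  unfolding Defs.convolution_def using conv_pt_int[OF f, of x] conv_pt_int[OF g, of x]
  by (simp add: right_diff_distrib)

end

lemma G_exp: "G_kernel \<beta> \<alpha> s = exponential_density (\<beta>/\<alpha>) s"
  unfolding G_kernel_def exponential_density_def by (auto simp: field_simps)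

lemma G_facts:
  assumes "\<beta> > 0" "\<alpha> > 0"
  shows "G_kernel \<beta> \<alpha> \<in> borel_measurable borel"
    and "\<And>s. 0 \<le> G_kernel \<beta> \<alpha> s"
    and "\<And>s. G_kernel \<beta> \<alpha> s \<le> \<beta>/\<alpha>"
    and "(\<integral>\<^sup>+s. ennreal (G_kernel \<beta> \<alpha> s) \<partial>lborel) = 1"
proof -
  show "G_kernel \<beta> \<alpha> \<in> borel_measurable borel" unfolding G_kernel_def by measurable
  show "\<And>s. 0 \<le> G_kernel \<beta> \<alpha> s" using assms unfolding G_kernel_def by auto
  show "\<And>s. G_kernel \<beta> \<alpha> s \<le> \<beta>/\<alpha>"
  proof -
    fix s
    have "s \<ge> 0 \<Longrightarrow> exp (-(\<beta> * s / \<alpha>)) \<le> 1" using assms by simp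
    then show "G_kernel \<beta> \<alpha> s \<le> \<beta>/\<alpha>" using assms unfolding G_kernel_def
      by (auto intro: mult_left_le[of _ "\<beta>/\<alpha>", simplified])
  qed
  have b: "0 < \<beta>/\<alpha>" using assms by simp
  interpret prob_space "density lborel (exponential_density (\<beta>/\<alpha>))"
    by (rule prob_space_exponential_density[OF b])
  have "emeasure (density lborel (exponential_density (\<beta>/\<alpha>))) UNIV = 1"
    using emeasure_space_1 by simp
  then show "(\<integral>\<^sup>+s. ennreal (G_kernel \<beta> \<alpha> s) \<partial>lborel) = 1"
    by (subst (asm) emeasure_density) (auto simp: G_exp)
qed

lemma G_FT:
  assumes "\<beta> > 0" "\<alpha> > 0"
  shows "FT (\<lambda>s. complex_of_real (G_kernel \<beta> \<alpha> s)) \<xi>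
    = complex_of_real (\<beta>/\<alpha>) / (complex_of_real (\<beta>/\<alpha>) + \<i> * complex_of_real \<xi>)"
proof -
  define b where "b = \<beta>/\<alpha>"
  have b: "0 < b" unfolding b_def using assms by simp
  define c where "c = complex_of_real b + \<i> * complex_of_real \<xi>"
  have c0: "c \<noteq> 0" unfolding c_def using b by (auto simp: complex_eq_iff)
  define K where "K = G_kernel \<beta> \<alpha>"
  have Km[measurable]: "K \<in> borel_measurable borel" unfolding K_def using G_facts(1)[OF assms] .
  have K0: "0 \<le> K s" for s unfolding K_def using G_facts(2)[OF assms] .
  have Kint: "integrable lborel K"
    using Km K0 G_facts(4)[OF assms] unfolding K_def by (intro integrableI_bounded) auto
  have Ks: "K s = (if 0 \<le> s then b * exp (-(b * s)) else 0)" for s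
    unfolding K_def G_kernel_def b_def by (auto simp: field_simps)
  define g where "g s = cis (-(s*\<xi>)) * complex_of_real (K s)" for s
  have gm[measurable]: "g \<in> borel_measurable borel" unfolding g_def by measurable
  have fin: "(\<integral>s. indicator {0..R} s *\<^sub>R g s \<partial>lborel) = of_real b * (1 - exp (-(c * of_real R))) / c"
    if R: "0 \<le> R" for R
  proof -
    define F where "F s = - (of_real b / c) * exp (-(c * of_real s))" for s
    define f where "f s = of_real b * exp (-(c * of_real s))" for s
    have "(\<integral>s. indicator {0..R} s *\<^sub>R g s \<partial>lborel) = (\<integral>s. indicator {0..R} s *\<^sub>R f s \<partial>lborel)"
    proof (rule Bochner_Integration.integral_cong[OF refl])
      fix s
      show "indicator {0..R} s *\<^sub>R g s = indicator {0..R} s *\<^sub>R f s"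
      proof (cases "s \<in> {0..R}")
        case True
        then have "g s = f s"
          by (simp add: g_def f_def Ks c_def cis_conv_exp exp_add[symmetric] algebra_simps flip: exp_of_real)
        then show ?thesis by simp
      qed simp
    qed
    also have "\<dots> = (LBINT s=ereal 0..ereal R. f s)"
    proof -
      have "(LBINT s=ereal 0..ereal R. f s) = (LBINT s:{0..R}. f s)" by (rule interval_integral_Icc[OF R])
      then show ?thesis by (simp add: set_lebesgue_integral_def)
    qed
    also have "\<dots> = F R - F 0"
    proof (rule interval_integral_FTC_finite)
      show "continuous_on {min 0 R..max 0 R} f" unfolding f_def by (intro continuous_intros)
      fix x
      show "(F has_vector_derivative f x) (at x within {min 0 R..max 0 R})"
      proof -
        have "((\<lambda>z. - (of_real b / c) * exp (-(c * z))) has_field_derivative f x) (at (of_real x))"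
          unfolding f_def using c0 by (auto intro!: derivative_eq_intros simp: field_simps)
        then show ?thesis unfolding F_def by (rule has_vector_derivative_real_field)
      qed
    qed
    also have "\<dots> = of_real b * (1 - exp (-(c * of_real R))) / c"
      unfolding F_def using c0 by (simp add: field_simps)
    finally show ?thesis .
  qed
  have lim1: "((\<lambda>R. \<integral>s. indicator {0..R} s *\<^sub>R g s \<partial>lborel) \<longlongrightarrow> (\<integral>s. g s \<partial>lborel)) at_top"
  proof -
    have p1: "g \<in> borel_measurable lborel" by simp
    have p2: "\<And>R. (\<lambda>s. indicator {0..R} s *\<^sub>R g s) \<in> borel_measurable lborel" by simp
    have p4: "AE s in lborel. ((\<lambda>R. indicator {0..R} s *\<^sub>R g s) \<longlongrightarrow> g s) at_top"
    proof (rule AE_I2)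
      fix s
      show "((\<lambda>R. indicator {0..R} s *\<^sub>R g s) \<longlongrightarrow> g s) at_top"
      proof (cases "0 \<le> s")
        case True
        have "eventually (\<lambda>R. indicator {0..R} s *\<^sub>R g s = g s) at_top"
          using eventually_ge_at_top[of s] by eventually_elim (use True in simp)
        then show ?thesis by (rule tendsto_eventually)
      next
        case False
        then have "g s = 0" by (simp add: g_def Ks)
        then show ?thesis by simp
      qed
    qed
    have p5: "\<forall>\<^sub>F R in at_top. AE s in lborel. norm (indicator {0..R} s *\<^sub>R g s) \<le> K s"
      by (auto simp: g_def norm_mult K0 indicator_def)
    show ?thesis using integral_dominated_convergence_at_top[OF p1 p2 Kint p4 p5] by simp
  qed
  have lim2: "((\<lambda>R. \<integral>s. indicator {0..R} s *\<^sub>R g s \<partial>lborel) \<longlongrightarrow> of_real b * (1 - 0) / c) at_top"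
  proof -
    have e0: "((\<lambda>R. exp (-(c * of_real R))) \<longlongrightarrow> 0) at_top"
    proof (rule tendsto_norm_zero_cancel)
      have Rec: "Re c = b" unfolding c_def by simp
      have eqn: "(\<lambda>R. norm (exp (-(c * of_real R)))) = (\<lambda>R. exp (-(b * R)))"
        by (simp add: norm_exp_eq_Re Rec)
      have lim: "((\<lambda>R. exp (-(b * R))) \<longlongrightarrow> 0) at_top"
      proof -
        have "filterlim (\<lambda>R. b * R) at_top at_top"
          by (rule filterlim_tendsto_pos_mult_at_top[OF tendsto_const b filterlim_ident])
        then have "filterlim (\<lambda>R. -(b * R)) at_bot at_top"
          by (simp add: filterlim_uminus_at_top)
        then show ?thesis by (rule filterlim_compose[OF exp_at_bot])
      qed
      show "((\<lambda>R. norm (exp (-(c * of_real R)))) \<longlongrightarrow> 0) at_top" unfolding eqn by (rule lim)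
    qed
    have "((\<lambda>R. of_real b * (1 - exp (-(c * of_real R))) / c) \<longlongrightarrow> of_real b * (1 - 0) / c) at_top"
      by (intro tendsto_intros e0 c0)
    moreover have "eventually (\<lambda>R. of_real b * (1 - exp (-(c * of_real R))) / c
        = (\<integral>s. indicator {0..R} s *\<^sub>R g s \<partial>lborel)) at_top"
      using eventually_ge_at_top[of 0] by eventually_elim (simp add: fin)
    ultimately show ?thesis by (rule Lim_transform_eventually)
  qed
  have "(\<integral>s. g s \<partial>lborel) = of_real b * (1 - 0) / c"
    using tendsto_unique[OF _ lim1 lim2] by simp
  then show ?thesis unfolding FT_def g_def K_def c_def b_def by simp
qed

lemma G_FT_norm:
  assumes "\<beta> > 0" "\<alpha> > 0"
  shows "(cmod (FT (\<lambda>s. complex_of_real (G_kernel \<beta> \<alpha> s)) \<xi>))\<^sup>2 = (\<beta>/\<alpha>)\<^sup>2 / ((\<beta>/\<alpha>)\<^sup>2 + \<xi>\<^sup>2)"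
proof -
  define b where "b = \<beta>/\<alpha>"
  have z: "(cmod (complex_of_real b + \<i> * complex_of_real \<xi>))\<^sup>2 = b\<^sup>2 + \<xi>\<^sup>2"
    by (simp add: cmod_power2)
  have "(cmod (complex_of_real b / (complex_of_real b + \<i> * complex_of_real \<xi>)))\<^sup>2
      = b\<^sup>2 / (cmod (complex_of_real b + \<i> * complex_of_real \<xi>))\<^sup>2"
    by (simp only: norm_divide power_divide norm_of_real power2_abs)
  then show ?thesis unfolding G_FT[OF assms] b_def[symmetric] z .
qed

lemma key_pt:
  fixes \<beta> \<alpha> \<epsilon> \<xi> :: real
  assumes \<beta>: "\<beta> > 0" and \<alpha>: "\<alpha> > 0" and \<epsilon>: "0 < \<epsilon>" "\<epsilon> < 1/2"
  shows "\<bar>\<xi>\<bar> powr (2*(1/2)) * ((\<beta>/\<alpha>)\<^sup>2 / ((\<beta>/\<alpha>)\<^sup>2 + \<xi>\<^sup>2))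
      \<le> (max 1 \<beta> * \<alpha> powr (-\<epsilon>))\<^sup>2 * \<bar>\<xi>\<bar> powr (2*(1/2-\<epsilon>))"
proof (cases "\<xi> = 0")
  case True then show ?thesis by simp
next
  case False
  define s where "s = \<bar>\<xi>\<bar>"
  define b where "b = \<beta>/\<alpha>"
  define t where "t = s / b"
  define C where "C = max 1 \<beta>"
  have s: "s > 0" using False unfolding s_def by simp
  have b: "b > 0" unfolding b_def using \<beta> \<alpha> by simp
  have t: "t > 0" unfolding t_def using s b by simp
  have st: "s = t * b" unfolding t_def using b by simp
  have sq: "\<xi>\<^sup>2 = s\<^sup>2" unfolding s_def by simp
  have e1: "\<bar>\<xi>\<bar> powr (2*(1/2)) = s powr (1 - 2*\<epsilon>) * s powr (2*\<epsilon>)"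
    unfolding s_def by (simp add: powr_add[symmetric])
  have e2: "(\<beta>/\<alpha>)\<^sup>2 / ((\<beta>/\<alpha>)\<^sup>2 + \<xi>\<^sup>2) = 1 / (1 + t\<^sup>2)"
    unfolding b_def[symmetric] sq t_def using b by (simp add: field_simps power_divide)
  have e3: "s powr (2*\<epsilon>) = t powr (2*\<epsilon>) * (\<beta> powr (2*\<epsilon>) * \<alpha> powr (-(2*\<epsilon>)))"
    unfolding st b_def using t \<beta> \<alpha> by (simp add: powr_mult powr_divide powr_minus_divide)
  have e5: "t powr (2*\<epsilon>) \<le> 1 + t\<^sup>2"
  proof (cases "t \<le> 1")
    case True
    have "t powr (2*\<epsilon>) \<le> 1 powr (2*\<epsilon>)" using True t \<epsilon> by (intro powr_mono2) auto
    then have "t powr (2*\<epsilon>) \<le> 1" by simp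
    then show ?thesis using zero_le_power2[of t] by linarith
  next
    case False
    have "t powr (2*\<epsilon>) \<le> t powr 2" using False \<epsilon> by (intro powr_mono) auto
    also have "\<dots> = t\<^sup>2" using t by (simp add: powr_numeral)
    finally show ?thesis by simp
  qed
  have e6: "\<beta> powr (2*\<epsilon>) \<le> C\<^sup>2"
  proof (cases "\<beta> \<le> 1")
    case True
    have "\<beta> powr (2*\<epsilon>) \<le> 1 powr (2*\<epsilon>)" using True \<beta> \<epsilon> by (intro powr_mono2) auto
    also have "\<dots> \<le> C\<^sup>2" unfolding C_def by simp
    finally show ?thesis .
  next
    case False
    have "\<beta> powr (2*\<epsilon>) \<le> \<beta> powr 2" using False \<epsilon> by (intro powr_mono) auto
    also have "\<dots> = C\<^sup>2" using False \<beta> unfolding C_def by (simp add: powr_numeral)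
    finally show ?thesis .
  qed
  have e7: "(C * \<alpha> powr (-\<epsilon>))\<^sup>2 = C\<^sup>2 * \<alpha> powr (-(2*\<epsilon>))"
    using \<alpha> by (simp add: power2_eq_square powr_add[symmetric])
  have A: "s powr (2*\<epsilon>) * (1 / (1 + t\<^sup>2)) \<le> C\<^sup>2 * \<alpha> powr (-(2*\<epsilon>))"
  proof -
    have "s powr (2*\<epsilon>) * (1 / (1 + t\<^sup>2)) = (t powr (2*\<epsilon>) / (1 + t\<^sup>2)) * (\<beta> powr (2*\<epsilon>) * \<alpha> powr (-(2*\<epsilon>)))"
      unfolding e3 by simp
    also have "\<dots> \<le> 1 * (C\<^sup>2 * \<alpha> powr (-(2*\<epsilon>)))"
    proof (rule mult_mono)
      show "t powr (2*\<epsilon>) / (1 + t\<^sup>2) \<le> 1" proof -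
        have "0 < 1 + t\<^sup>2" using zero_le_power2[of t] by linarith
        then show ?thesis using e5 by (simp add: divide_le_eq_1)
      qed
      show "\<beta> powr (2*\<epsilon>) * \<alpha> powr (-(2*\<epsilon>)) \<le> C\<^sup>2 * \<alpha> powr (-(2*\<epsilon>))"
        using e6 by (intro mult_right_mono) auto
    qed auto
    finally show ?thesis by simp
  qed
  have "\<bar>\<xi>\<bar> powr (2*(1/2)) * ((\<beta>/\<alpha>)\<^sup>2 / ((\<beta>/\<alpha>)\<^sup>2 + \<xi>\<^sup>2))
      = s powr (1 - 2*\<epsilon>) * (s powr (2*\<epsilon>) * (1 / (1 + t\<^sup>2)))"
    unfolding e1 e2 by simp
  also have "\<dots> \<le> s powr (1 - 2*\<epsilon>) * (C\<^sup>2 * \<alpha> powr (-(2*\<epsilon>)))"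
    by (intro mult_left_mono A) auto
  also have "\<dots> = (max 1 \<beta> * \<alpha> powr (-\<epsilon>))\<^sup>2 * \<bar>\<xi>\<bar> powr (2*(1/2-\<epsilon>))"
    unfolding C_def[symmetric] e7 s_def by (simp add: algebra_simps)
  finally show ?thesis .
qed

lemma N2_L2_fin: "is_L2 u \<Longrightarrow> N2 u < \<infinity>"
  unfolding is_L2_def N2_def integrable_iff_bounded by simp

lemma L2_of_N2: 
  fixes v :: "real \<Rightarrow> complex"
  assumes [measurable]: "v \<in> borel_measurable borel" and fin: "N2 v < \<infinity>"
  shows "is_L2 v"
  unfolding is_L2_def
proof
  show "v \<in> borel_measurable lborel" by simp
  show "integrable lborel (\<lambda>x. (cmod (v x))\<^sup>2)"
    by (rule integrableI_bounded) (use fin in \<open>auto simp: N2_def\<close>)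
qed

lemma trunc_L2:
  fixes u :: "real \<Rightarrow> complex"
  assumes u: "is_L2 u"
  shows "is_L2 (\<lambda>x. indicator {-R..R} x *\<^sub>R u x)"
proof -
  have [measurable]: "u \<in> borel_measurable borel" using u by (rule is_L2_meas)
  have "N2 (\<lambda>x. indicator {-R..R} x *\<^sub>R u x) \<le> N2 u"
    unfolding N2_def by (intro nn_integral_mono) (auto simp: indicator_def)
  then show ?thesis using N2_L2_fin[OF u] by (intro L2_of_N2) auto
qed

lemma main_bound:
  fixes \<beta> \<alpha> \<epsilon> :: real and u :: "real \<Rightarrow> complex"
  assumes \<beta>: "\<beta> > 0" and \<alpha>: "\<alpha> > 0" and \<epsilon>: "0 < \<epsilon>" "\<epsilon> < 1/4"
    and uH: "in_Hs (1/2 - \<epsilon>) u"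
  shows "Hs_seminorm_sq (1/2) (convolution (G_kernel \<beta> \<alpha>) u)
          \<le> ennreal ((max 1 \<beta> * \<alpha> powr (- \<epsilon>))\<^sup>2) * Hs_seminorm_sq (1/2 - \<epsilon>) u"
proof -
  have u: "is_L2 u" using uH unfolding in_Hs_def by simp
  have um[measurable]: "u \<in> borel_measurable borel" using u by (rule is_L2_meas)
  define K where "K = G_kernel \<beta> \<alpha>"
  have Km[measurable]: "K \<in> borel_measurable borel" unfolding K_def by (rule G_facts(1)[OF \<beta> \<alpha>])
  have K0: "\<And>s. 0 \<le> K s" unfolding K_def by (rule G_facts(2)[OF \<beta> \<alpha>])
  have KB: "\<And>s. K s \<le> \<beta>/\<alpha>" unfolding K_def by (rule G_facts(3)[OF \<beta> \<alpha>])
  have K1: "(\<integral>\<^sup>+s. ennreal (K s) \<partial>lborel) = 1" unfolding K_def by (rule G_facts(4)[OF \<beta> \<alpha>])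
  note KK = Km K0 KB K1
  define v where "v = convolution K u"
  have vm[measurable]: "v \<in> borel_measurable borel" unfolding v_def by (rule conv_meas[OF KK um])
  have Nv: "N2 v \<le> N2 u" unfolding v_def by (rule young[OF KK um])
  have v: "is_L2 v" using Nv N2_L2_fin[OF u] by (intro L2_of_N2) auto
  define Fu where "Fu = fourier_L2 u"
  have hFu: "has_fourier_L2 u Fu" unfolding Fu_def by (rule fourier_L2_has[OF u])
  have Fum[measurable]: "Fu \<in> borel_measurable borel" using hFu unfolding has_fourier_L2_def by simp
  define Gh where "Gh = FT (\<lambda>s. complex_of_real (K s))"
  have Ghm[measurable]: "Gh \<in> borel_measurable borel" unfolding Gh_def by measurable
  have Ghn: "(cmod (Gh \<xi>))\<^sup>2 = (\<beta>/\<alpha>)\<^sup>2 / ((\<beta>/\<alpha>)\<^sup>2 + \<xi>\<^sup>2)" for \<xi>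
    unfolding Gh_def K_def by (rule G_FT_norm[OF \<beta> \<alpha>])
  have Gb: "cmod (Gh \<xi>) \<le> 1" for \<xi>
  proof -
    have "(cmod (Gh \<xi>))\<^sup>2 \<le> 1\<^sup>2" unfolding Ghn using \<beta> \<alpha>
      by (simp add: divide_le_eq_1 add_pos_nonneg)
    then show ?thesis by (rule power2_le_imp_le) simp
  qed
  define uR where "uR R x = indicator {-R..R} x *\<^sub>R u x" for R x
  define vR where "vR R x = indicator {-R..R} x *\<^sub>R v x" for R x
  have uRm[measurable]: "uR R \<in> borel_measurable borel" for R unfolding uR_def by measurable
  have vRm[measurable]: "vR R \<in> borel_measurable borel" for R unfolding vR_def by measurable
  have uR_int: "integrable lborel (uR R)" for R unfolding uR_def by (rule trunc_integrable[OF u])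
  have vR_int: "integrable lborel (vR R)" for R unfolding vR_def by (rule trunc_integrable[OF v])
  have uR_L2: "is_L2 (uR R)" for R unfolding uR_def by (rule trunc_L2[OF u])
  have tu: "fourier_trunc u R = FT (uR R)" for R unfolding uR_def by (rule fourier_trunc_FT)
  have tv: "fourier_trunc v R = FT (vR R)" for R unfolding vR_def by (rule fourier_trunc_FT)
  define cR where "cR R = convolution K (uR R)" for R
  have cRm[measurable]: "cR R \<in> borel_measurable borel" for R unfolding cR_def by (rule conv_meas[OF KK uRm])
  have cR_int: "integrable lborel (cR R)" for R unfolding cR_def by (rule conv_L1[OF KK uR_int])
  have cFT: "FT (cR R) \<xi> = Gh \<xi> * FT (uR R) \<xi>" for R \<xi>
    unfolding cR_def Gh_def by (rule conv_FT[OF KK uR_int])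
  have bound: "N2 (\<lambda>\<xi>. Gh \<xi> * Fu \<xi> - fourier_trunc v R \<xi>)
      \<le> 2 * N2 (\<lambda>\<xi>. Fu \<xi> - fourier_trunc u R \<xi>)
        + 2 * (2*pi * (2 * N2 (\<lambda>x. u x - uR R x) + 2 * N2 (\<lambda>x. v x - vR R x)))" for R
  proof -
    have "N2 (\<lambda>\<xi>. Gh \<xi> * Fu \<xi> - fourier_trunc v R \<xi>)
        \<le> 2 * N2 (\<lambda>\<xi>. Gh \<xi> * Fu \<xi> - FT (cR R) \<xi>) + 2 * N2 (\<lambda>\<xi>. FT (cR R) \<xi> - FT (vR R) \<xi>)"
      unfolding tv by (rule N2_tri3) auto
    also have "N2 (\<lambda>\<xi>. Gh \<xi> * Fu \<xi> - FT (cR R) \<xi>) \<le> N2 (\<lambda>\<xi>. Fu \<xi> - fourier_trunc u R \<xi>)"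
      unfolding N2_def cFT tu
    proof (intro nn_integral_mono ennreal_leI)
      fix \<xi>
      have "(cmod (Gh \<xi> * Fu \<xi> - Gh \<xi> * FT (uR R) \<xi>))\<^sup>2 = (cmod (Gh \<xi>))\<^sup>2 * (cmod (Fu \<xi> - FT (uR R) \<xi>))\<^sup>2"
        by (simp add: norm_mult power_mult_distrib right_diff_distrib[symmetric])
      also have "\<dots> \<le> 1 * (cmod (Fu \<xi> - FT (uR R) \<xi>))\<^sup>2"
        using Gb[of \<xi>] by (intro mult_right_mono) (auto simp: power_le_one)
      finally show "(cmod (Gh \<xi> * Fu \<xi> - Gh \<xi> * FT (uR R) \<xi>))\<^sup>2 \<le> (cmod (Fu \<xi> - FT (uR R) \<xi>))\<^sup>2"
        by simp
    qed
    also have "N2 (\<lambda>\<xi>. FT (cR R) \<xi> - FT (vR R) \<xi>) = N2 (FT (\<lambda>x. cR R x - vR R x))"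
      by (intro arg_cong[where f=N2] ext FT_diff[symmetric] cR_int vR_int)
    also have "\<dots> \<le> 2*pi * N2 (\<lambda>x. cR R x - vR R x)"
      by (intro plancherel Bochner_Integration.integrable_diff cR_int vR_int)
    also have "N2 (\<lambda>x. cR R x - vR R x) \<le> 2 * N2 (\<lambda>x. cR R x - v x) + 2 * N2 (\<lambda>x. v x - vR R x)"
      by (rule N2_tri3) auto
    also have "N2 (\<lambda>x. cR R x - v x) \<le> N2 (\<lambda>x. u x - uR R x)"
    proof -
      have "N2 (\<lambda>x. cR R x - v x) = N2 (\<lambda>x. v x - cR R x)" by (rule N2_sym)
      also have "(\<lambda>x. v x - cR R x) = convolution K (\<lambda>y. u y - uR R y)"
        unfolding v_def cR_def by (intro ext conv_diff[OF KK u uR_L2])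
      also have "N2 (convolution K (\<lambda>y. u y - uR R y)) \<le> N2 (\<lambda>x. u x - uR R x)"
        by (rule young[OF KK]) measurable
      finally show ?thesis .
    qed
    finally show ?thesis
      by (simp add: add_mono mult_left_mono)
  qed
  have lim_bound: "((\<lambda>R. 2 * N2 (\<lambda>\<xi>. Fu \<xi> - fourier_trunc u R \<xi>)
        + 2 * (2*pi * (2 * N2 (\<lambda>x. u x - uR R x) + 2 * N2 (\<lambda>x. v x - vR R x)))) \<longlongrightarrow>
      2 * 0 + 2 * (ennreal (2*pi) * (2 * 0 + 2 * 0))) at_top"
  proof -
    have l1: "((\<lambda>R. N2 (\<lambda>\<xi>. Fu \<xi> - fourier_trunc u R \<xi>)) \<longlongrightarrow> 0) at_top"
      using hFu unfolding has_fourier_L2_def N2_def by simp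
    have l2: "((\<lambda>R. N2 (\<lambda>x. u x - uR R x)) \<longlongrightarrow> 0) at_top"
      unfolding uR_def by (rule trunc_tail[OF u])
    have l3: "((\<lambda>R. N2 (\<lambda>x. v x - vR R x)) \<longlongrightarrow> 0) at_top"
      unfolding vR_def by (rule trunc_tail[OF v])
    show ?thesis by (intro tendsto_intros l1 l2 l3) auto
  qed
  have limF: "((\<lambda>R. N2 (\<lambda>\<xi>. Gh \<xi> * Fu \<xi> - fourier_trunc v R \<xi>)) \<longlongrightarrow> 0) at_top"
  proof (rule tendsto_sandwich[OF _ _ tendsto_const])
    show "eventually (\<lambda>R. 0 \<le> N2 (\<lambda>\<xi>. Gh \<xi> * Fu \<xi> - fourier_trunc v R \<xi>)) at_top" by simp
    show "eventually (\<lambda>R. N2 (\<lambda>\<xi>. Gh \<xi> * Fu \<xi> - fourier_trunc v R \<xi>) \<le>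
        2 * N2 (\<lambda>\<xi>. Fu \<xi> - fourier_trunc u R \<xi>)
        + 2 * (2*pi * (2 * N2 (\<lambda>x. u x - uR R x) + 2 * N2 (\<lambda>x. v x - vR R x)))) at_top"
      using bound by simp
    show "((\<lambda>R. 2 * N2 (\<lambda>\<xi>. Fu \<xi> - fourier_trunc u R \<xi>)
        + 2 * (2*pi * (2 * N2 (\<lambda>x. u x - uR R x) + 2 * N2 (\<lambda>x. v x - vR R x)))) \<longlongrightarrow> 0) at_top"
      using lim_bound by simp
  qed
  define Fv where "Fv = fourier_L2 v"
  have hFv: "has_fourier_L2 v Fv" unfolding Fv_def by (rule fourier_L2_has[OF v])
  have Fvm[measurable]: "Fv \<in> borel_measurable borel" using hFv unfolding has_fourier_L2_def by simp
  have tvm: "fourier_trunc v R \<in> borel_measurable borel" for R unfolding tv by measurable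
  have AEeq: "AE \<xi> in lborel. Fv \<xi> = Gh \<xi> * Fu \<xi>"
  proof (rule L2_unique[OF Fvm _ tvm])
    show "(\<lambda>\<xi>. Gh \<xi> * Fu \<xi>) \<in> borel_measurable borel" by measurable
    show "((\<lambda>R. N2 (\<lambda>\<xi>. Fv \<xi> - fourier_trunc v R \<xi>)) \<longlongrightarrow> 0) at_top"
      using hFv unfolding has_fourier_L2_def N2_def by simp
    show "((\<lambda>R. N2 (\<lambda>\<xi>. Gh \<xi> * Fu \<xi> - fourier_trunc v R \<xi>)) \<longlongrightarrow> 0) at_top"
      by (rule limF)
  qed
  have "Hs_seminorm_sq (1/2) (convolution (G_kernel \<beta> \<alpha>) u)
      = (\<integral>\<^sup>+\<xi>. ennreal (\<bar>\<xi>\<bar> powr (2 * (1/2)) * (cmod (Fv \<xi>))\<^sup>2) \<partial>lborel)"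
    unfolding Hs_seminorm_sq_def Fv_def v_def K_def ..
  also have "\<dots> = (\<integral>\<^sup>+\<xi>. ennreal ((\<bar>\<xi>\<bar> powr (2 * (1/2)) * (cmod (Gh \<xi>))\<^sup>2) * (cmod (Fu \<xi>))\<^sup>2) \<partial>lborel)"
    by (rule nn_integral_cong_AE) (use AEeq in \<open>auto simp: norm_mult power_mult_distrib mult.assoc\<close>)
  also have "\<dots> \<le> (\<integral>\<^sup>+\<xi>. ennreal ((max 1 \<beta> * \<alpha> powr (- \<epsilon>))\<^sup>2) *
        ennreal (\<bar>\<xi>\<bar> powr (2 * (1/2 - \<epsilon>)) * (cmod (Fu \<xi>))\<^sup>2) \<partial>lborel)"
  proof (intro nn_integral_mono)
    fix \<xi>
    have "\<bar>\<xi>\<bar> powr (2 * (1/2)) * (cmod (Gh \<xi>))\<^sup>2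
        \<le> (max 1 \<beta> * \<alpha> powr (-\<epsilon>))\<^sup>2 * \<bar>\<xi>\<bar> powr (2*(1/2-\<epsilon>))"
      unfolding Ghn using key_pt[OF \<beta> \<alpha> \<epsilon>(1)] \<epsilon>(2) by simp
    then have "(\<bar>\<xi>\<bar> powr (2 * (1/2)) * (cmod (Gh \<xi>))\<^sup>2) * (cmod (Fu \<xi>))\<^sup>2
        \<le> ((max 1 \<beta> * \<alpha> powr (-\<epsilon>))\<^sup>2 * \<bar>\<xi>\<bar> powr (2*(1/2-\<epsilon>))) * (cmod (Fu \<xi>))\<^sup>2"
      by (rule mult_right_mono) simp
    then show "ennreal ((\<bar>\<xi>\<bar> powr (2 * (1/2)) * (cmod (Gh \<xi>))\<^sup>2) * (cmod (Fu \<xi>))\<^sup>2)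
        \<le> ennreal ((max 1 \<beta> * \<alpha> powr (- \<epsilon>))\<^sup>2) * ennreal (\<bar>\<xi>\<bar> powr (2 * (1/2 - \<epsilon>)) * (cmod (Fu \<xi>))\<^sup>2)"
      by (simp add: ennreal_mult[symmetric] mult.assoc ennreal_leI)
  qed
  also have "\<dots> = ennreal ((max 1 \<beta> * \<alpha> powr (- \<epsilon>))\<^sup>2) * Hs_seminorm_sq (1/2 - \<epsilon>) u"
    unfolding Hs_seminorm_sq_def Fu_def[symmetric] by (rule nn_integral_cmult) measurable
  finally show ?thesis .
qed

theorem proposition5:
  fixes \<beta> :: real
  assumes "\<beta> > 0"
  shows "\<exists>C>0. \<exists>\<epsilon>0. 0 < \<epsilon>0 \<and> \<epsilon>0 < 1/2 \<and>
    (\<forall>\<alpha>>0. \<forall>\<epsilon>. 0 < \<epsilon> \<and> \<epsilon> < \<epsilon>0 \<longrightarrow>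
      (\<forall>u. in_Hs (1/2 - \<epsilon>) u \<longrightarrow>
        Hs_seminorm_sq (1/2) (convolution (G_kernel \<beta> \<alpha>) u)
          \<le> ennreal ((C * \<alpha> powr (- \<epsilon>))\<^sup>2) * Hs_seminorm_sq (1/2 - \<epsilon>) u))"
proof -
  have *: "\<forall>\<alpha>>0. \<forall>\<epsilon>. 0 < \<epsilon> \<and> \<epsilon> < 1/4 \<longrightarrow>
      (\<forall>u. in_Hs (1/2 - \<epsilon>) u \<longrightarrow>
        Hs_seminorm_sq (1/2) (convolution (G_kernel \<beta> \<alpha>) u)
          \<le> ennreal ((max 1 \<beta> * \<alpha> powr (- \<epsilon>))\<^sup>2) * Hs_seminorm_sq (1/2 - \<epsilon>) u)"
    using main_bound[OF assms] by blast
  show ?thesis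
    apply (rule exI[of _ "max 1 \<beta>"])
    apply (rule conjI, simp)
    apply (rule exI[of _ "1/4::real"])
    using * by simp
qed

end
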